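(* Let $e[r]$ be an affine function of $r$ with $e[1]>0$ and $e[-1]>0$. The set $\pi(U)$ is bounded by a constant depending only on $e$ and the dimension $n$. Moreover, for every $z\in\overline U\setminus K$ there exists $\bar z\in\Lambda\setminus\{0\}$ such that $z\pm\bar z\in\overline U$.
   Context: Let $n\ge2$, $\mathcal S_0^{n\times n}$ the trace-free symmetric matrices, $Z:=\mathbb{R}\times\mathbb{R}^n\times\mathbb{R}^n\times\mathcal S_0^{n\times n}\times\mathbb{R}$ with elements $z=(\rho,v,m,\sigma,p)$, $\pi(z):=(\rho,v,m,\sigma)$. $K:=\{z:\rho\in\{\pm1\},m=\rho v,v\otimes v-\sigma=e[\rho]\mathrm{Id}\}$. For $\rho\in(-1,1)$: $M(z)=\frac{v\otimes v-\rho(m\otimes v+v\otimes m)+m\otimes m}{1-\rho^2}-\sigma$, $Q(z)=\lambda_{\max}(M(z))$, $T_\pm(z)=\frac{|m\pm v|^2}{n(\rho\pm1)^2}$; $U:=\{z:\rho\in(-1,1),T_\pm(z)<e[\pm1],Q(z)<e[\rho]\}$. Wave cone: $M_\Lambda(\bar z):=\begin{pmatrix}\bar\sigma+\bar p\,\mathrm{Id}&\bar v\\ \bar v^T&0\\ \bar m^T&\bar\rho\end{pmatrix}$, $\Lambda:=\{\bar z:\ker M_\Lambda(\bar z)\ne\{0\},(\bar\rho,\bar v)\ne0\}$. *)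

theory Defs
  imports "HOL-Analysis.Analysis"
begin

text \<open>State space Z = R x R^n x R^n x S_0^{n x n} x R. Elements are tuples
  (rho, v, m, sigma, p); the constraint that sigma is symmetric and trace-free
  is expressed by the carrier set Zset.\<close>

type_synonym 'n state = "real \<times> (real^'n) \<times> (real^'n) \<times> (real^'n^'n) \<times> real"

definition Zset :: "'n::finite state set" where
  "Zset = {(\<rho>, v, m, \<sigma>, p). transpose \<sigma> = \<sigma> \<and> trace \<sigma> = 0}"

definition proj :: "'n::finite state \<Rightarrow> real \<times> (real^'n) \<times> (real^'n) \<times> (real^'n^'n)" where
  "proj z = (case z of (\<rho>, v, m, \<sigma>, p) \<Rightarrow> (\<rho>, v, m, \<sigma>))"

definition outer :: "real^'n \<Rightarrow> real^'n \<Rightarrow> real^'n^'n" where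
  "outer a b = (\<chi> i j. a $ i * b $ j)"

definition lambda_max :: "real^'n^'n \<Rightarrow> real" where
  "lambda_max A = Max {c. \<exists>x. x \<noteq> 0 \<and> A *v x = c *\<^sub>R x}"

definition Kset :: "(real \<Rightarrow> real) \<Rightarrow> 'n::finite state set" where
  "Kset e = {z \<in> Zset. case z of (\<rho>, v, m, \<sigma>, p) \<Rightarrow>
      (\<rho> = 1 \<or> \<rho> = -1) \<and> m = \<rho> *\<^sub>R v \<and> outer v v - \<sigma> = e \<rho> *\<^sub>R mat 1}"

definition Mmat :: "'n::finite state \<Rightarrow> real^'n^'n" where
  "Mmat z = (case z of (\<rho>, v, m, \<sigma>, p) \<Rightarrow>
      (1 / (1 - \<rho>^2)) *\<^sub>R (outer v v - \<rho> *\<^sub>R (outer m v + outer v m) + outer m m) - \<sigma>)"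

definition Qf :: "'n::finite state \<Rightarrow> real" where
  "Qf z = lambda_max (Mmat z)"

definition Tplus :: "'n::finite state \<Rightarrow> real" where
  "Tplus z = (case z of (\<rho>, v, m, \<sigma>, p) \<Rightarrow>
      (norm (m + v))^2 / (real CARD('n) * (\<rho> + 1)^2))"

definition Tminus :: "'n::finite state \<Rightarrow> real" where
  "Tminus z = (case z of (\<rho>, v, m, \<sigma>, p) \<Rightarrow>
      (norm (m - v))^2 / (real CARD('n) * (\<rho> - 1)^2))"

definition Uset :: "(real \<Rightarrow> real) \<Rightarrow> 'n::finite state set" where
  "Uset e = {z \<in> Zset. case z of (\<rho>, v, m, \<sigma>, p) \<Rightarrow>
      -1 < \<rho> \<and> \<rho> < 1 \<and> Tplus z < e 1 \<and> Tminus z < e (-1) \<and> Qf z < e \<rho>}"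

text \<open>Wave cone: zbar in Z with (rhobar, vbar) nonzero and ker M_Lambda(zbar) nontrivial,
  where M_Lambda(zbar) is the (n+2) x (n+1) matrix
  [[sigma + p Id, v], [v^T, 0], [m^T, rho]] acting on (x, t) in R^n x R.\<close>
definition Lambda :: "'n::finite state set" where
  "Lambda = {z \<in> Zset. case z of (\<rho>, v, m, \<sigma>, p) \<Rightarrow>
      (\<exists>x t. (x, t) \<noteq> (0, 0) \<and>
         (\<sigma> + p *\<^sub>R mat 1) *v x + t *\<^sub>R v = 0 \<and>
         v \<bullet> x = 0 \<and>
         m \<bullet> x + \<rho> * t = 0)
      \<and> (\<rho>, v) \<noteq> (0, 0)}"

end

theory Submission
  imports Defs
begin

lemma outer_mv: "outer a b *v x = (b \<bullet> x) *\<^sub>R a"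
  by (simp add: vec_eq_iff outer_def matrix_vector_mult_def inner_vec_def sum_distrib_left mult_ac)

lemma transpose_outer: "transpose (outer a b) = outer b a"
  by (simp add: vec_eq_iff outer_def transpose_def)

lemma trace_outer: "trace (outer a b) = a \<bullet> b"
  by (simp add: trace_def outer_def inner_vec_def)

lemma trace_scaleR: "trace (c *\<^sub>R (A::real^'n^'n)) = c * trace A"
  by (simp add: trace_def sum_distrib_left)

lemma transpose_scaleR': "transpose (c *\<^sub>R (A::real^'n^'n)) = c *\<^sub>R transpose A"
  by (simp add: vec_eq_iff transpose_def)

lemma transpose_add': "transpose ((A::real^'n^'n) + B) = transpose A + transpose B"
  by (simp add: vec_eq_iff transpose_def)

lemma transpose_diff': "transpose ((A::real^'n^'n) - B) = transpose A - transpose B"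
  by (simp add: vec_eq_iff transpose_def)

lemma transpose_mat': "transpose (mat c :: real^'n^'n) = mat c"
  by (simp add: vec_eq_iff transpose_def mat_def)

lemma sym_inner:
  fixes A :: "real^'n^'n"
  assumes "transpose A = A"
  shows "x \<bullet> (A *v y) = y \<bullet> (A *v x)"
proof -
  have "x \<bullet> (A *v y) = (x v* A) \<bullet> y" by (simp add: dot_lmul_matrix)
  also have "x v* A = transpose A *v x"
    by (metis vector_transpose_matrix transpose_transpose)
  finally show ?thesis using assms by (simp add: inner_commute)
qed

lemma quad_expand:
  fixes A :: "real^'n^'n"
  assumes "transpose A = A"
  shows "(x + t *\<^sub>R y) \<bullet> (A *v (x + t *\<^sub>R y)) = x \<bullet> (A *v x) + 2 * t * (y \<bullet> (A *v x)) + t^2 * (y \<bullet> (A *v y))"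
  using sym_inner[OF assms, of x y]
  by (simp add: algebra_simps matrix_vector_mult_scaleR inner_add_left inner_add_right power2_eq_square)

lemma psd_cs:
  fixes A :: "real^'n^'n"
  assumes "transpose A = A" and psd: "\<And>z. z \<bullet> (A *v z) \<ge> 0"
  shows "(y \<bullet> (A *v x))^2 \<le> (x \<bullet> (A *v x)) * (y \<bullet> (A *v y))"
proof -
  define a where "a = x \<bullet> (A *v x)"
  define b where "b = y \<bullet> (A *v x)"
  define c where "c = y \<bullet> (A *v y)"
  have q: "\<And>t. a + 2*t*b + t^2*c \<ge> 0"
    using psd quad_expand[OF assms(1)] unfolding a_def b_def c_def by metis
  have a0: "a \<ge> 0" using q[of 0] by simp
  have c0: "c \<ge> 0" using psd unfolding c_def by simp
  show ?thesis
  proof (cases "c = 0")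
    case True
    show ?thesis
    proof (rule ccontr)
      assume "\<not> ?thesis"
      hence "b \<noteq> 0" using True unfolding a_def b_def c_def by simp
      have "a + 2*(-(a+1)/(2*b))*b + (-(a+1)/(2*b))^2*c \<ge> 0" by (rule q)
      with True \<open>b \<noteq> 0\<close> show False by (simp add: field_simps)
    qed
  next
    case False
    hence cp: "c > 0" using c0 by simp
    have "a + 2*(-b/c)*b + (-b/c)^2*c \<ge> 0" by (rule q)
    hence "a - b^2/c \<ge> 0" using cp by (simp add: field_simps power2_eq_square)
    hence "b^2 \<le> a*c" using cp by (simp add: field_simps)
    thus ?thesis unfolding a_def b_def c_def .
  qed
qed

lemma min_eig:
  fixes A :: "real^'n^'n"
  assumes sym: "transpose A = A"
  shows "\<exists>x \<mu>. x \<noteq> 0 \<and> A *v x = \<mu> *\<^sub>R x \<and> (\<forall>\<xi>. \<mu> * (\<xi> \<bullet> \<xi>) \<le> \<xi> \<bullet> (A *v \<xi>))"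
proof -
  let ?f = "\<lambda>x::real^'n. x \<bullet> (A *v x)"
  have cont: "continuous_on (sphere 0 1) ?f"
    by (intro continuous_intros linear_continuous_on matrix_vector_mul_bounded_linear)
  have ne: "sphere (0::real^'n) 1 \<noteq> {}" 
  proof -
    have "axis undefined (1::real) \<in> sphere (0::real^'n) 1" by (simp add: norm_axis_1)
    thus ?thesis by blast
  qed
  obtain x0 where x0: "x0 \<in> sphere 0 1" and mn: "\<And>y. y \<in> sphere 0 1 \<Longrightarrow> ?f x0 \<le> ?f y"
    using continuous_attains_inf[OF compact_sphere ne cont] by blast
  define \<mu> where "\<mu> = ?f x0"
  have nx0: "norm x0 = 1" using x0 by simp
  have x0x0: "x0 \<bullet> x0 = 1" using nx0 by (simp add: dot_square_norm)
  have ray: "\<mu> * (\<xi> \<bullet> \<xi>) \<le> \<xi> \<bullet> (A *v \<xi>)" for \<xi>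
  proof (cases "\<xi> = 0")
    case True thus ?thesis by simp
  next
    case False
    define u where "u = (1 / norm \<xi>) *\<^sub>R \<xi>"
    have "u \<in> sphere 0 1" using False by (simp add: u_def)
    hence "\<mu> \<le> ?f u" using mn unfolding \<mu>_def by blast
    also have "?f u = (1/norm \<xi>)^2 * ?f \<xi>"
      by (simp add: u_def matrix_vector_mult_scaleR power2_eq_square)
    finally have 1: "\<mu> \<le> (1/norm \<xi>)^2 * ?f \<xi>" .
    have np: "norm \<xi> > 0" using False by simp
    have "\<mu> * (norm \<xi>)^2 \<le> (1/norm \<xi>)^2 * ?f \<xi> * (norm \<xi>)^2"
      using 1 by (simp add: mult_right_mono)
    also have "\<dots> = ?f \<xi>" using np by (simp add: power2_eq_square)
    finally show ?thesis by (simp add: dot_square_norm)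
  qed
  define y where "y = A *v x0 - \<mu> *\<^sub>R x0"
  have yx0: "y \<bullet> x0 = 0" unfolding y_def \<mu>_def using x0x0
    by (simp add: inner_diff_left inner_commute[of "A *v x0" x0])
  have yA: "y \<bullet> (A *v x0) = y \<bullet> y"
  proof -
    have "A *v x0 = y + \<mu> *\<^sub>R x0" unfolding y_def by simp
    hence "y \<bullet> (A *v x0) = y \<bullet> y + \<mu> * (y \<bullet> x0)" by (simp add: inner_add_right)
    thus ?thesis using yx0 by simp
  qed
  define C where "C = y \<bullet> (A *v y) - \<mu> * (y \<bullet> y)"
  have key: "2 * t * (y \<bullet> y) + t^2 * C \<ge> 0" for t
  proof -
    have "\<mu> * ((x0 + t *\<^sub>R y) \<bullet> (x0 + t *\<^sub>R y)) \<le> ?f (x0 + t *\<^sub>R y)" by (rule ray)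
    also have "?f (x0 + t *\<^sub>R y) = \<mu> + 2 * t * (y \<bullet> y) + t^2 * (y \<bullet> (A *v y))"
      using quad_expand[OF sym, of x0 t y] yA unfolding \<mu>_def by simp
    also have "(x0 + t *\<^sub>R y) \<bullet> (x0 + t *\<^sub>R y) = 1 + t^2 * (y \<bullet> y)"
    proof -
      have "(x0 + t *\<^sub>R y) \<bullet> (x0 + t *\<^sub>R y) = x0 \<bullet> x0 + 2 * t * (y \<bullet> x0) + t^2 * (y \<bullet> y)"
        by (simp add: inner_add_left inner_add_right inner_commute[of x0 y] power2_eq_square algebra_simps)
      thus ?thesis using x0x0 yx0 by simp
    qed
    finally have "\<mu> * (1 + t\<^sup>2 * (y \<bullet> y)) \<le> \<mu> + 2 * t * (y \<bullet> y) + t\<^sup>2 * (y \<bullet> (A *v y))" .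
    thus ?thesis unfolding C_def by (simp add: algebra_simps)
  qed
  have "y = 0"
  proof (rule ccontr)
    assume "y \<noteq> 0"
    hence yy: "y \<bullet> y > 0" by simp
    define D where "D = \<bar>C\<bar> + 1"
    have Dp: "D > 0" unfolding D_def by simp
    define t where "t = - (y \<bullet> y) / D"
    have k: "2 * t * (y \<bullet> y) + t^2 * C \<ge> 0" by (rule key)
    have e1: "2 * t * (y \<bullet> y) = - 2 * (y \<bullet> y)^2 / D" unfolding t_def by (simp add: power2_eq_square)
    have e2: "t^2 * C = (y \<bullet> y)^2 * C / D^2" unfolding t_def by (simp add: power_divide)
    have "(y \<bullet> y)^2 * C / D^2 \<le> (y \<bullet> y)^2 * D / D^2"
      using Dp by (intro divide_right_mono mult_left_mono) (auto simp: D_def)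
    also have "\<dots> = (y \<bullet> y)^2 / D" using Dp by (simp add: power2_eq_square)
    finally have "2 * t * (y \<bullet> y) + t^2 * C \<le> -(((y \<bullet> y)^2) / D)" using e1 e2 by simp
    moreover have "(y \<bullet> y)^2 / D > 0" using yy Dp by simp
    ultimately show False using k by linarith
  qed
  hence "A *v x0 = \<mu> *\<^sub>R x0" unfolding y_def by simp
  moreover have "x0 \<noteq> 0" using nx0 by auto
  ultimately show ?thesis using ray by blast
qed

lemma max_eig:
  fixes A :: "real^'n^'n"
  assumes sym: "transpose A = A"
  shows "\<exists>x \<mu>. x \<noteq> 0 \<and> A *v x = \<mu> *\<^sub>R x \<and> (\<forall>\<xi>. \<xi> \<bullet> (A *v \<xi>) \<le> \<mu> * (\<xi> \<bullet> \<xi>))"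
proof -
  have tn: "transpose (-A) = - transpose A" by (simp add: vec_eq_iff transpose_def)
  have "transpose (-A) = -A" unfolding tn sym ..
  then obtain x \<mu> where x: "x \<noteq> 0" "(-A) *v x = \<mu> *\<^sub>R x" and r: "\<forall>\<xi>. \<mu> * (\<xi> \<bullet> \<xi>) \<le> \<xi> \<bullet> ((-A) *v \<xi>)"
    using min_eig by blast
  have neg: "\<And>v. (-A) *v v = - (A *v v)" by (simp add: vec_eq_iff matrix_vector_mult_def sum_negf)
  have 1: "A *v x = (-\<mu>) *\<^sub>R x"
  proof -
    have "A *v x = - ((-A) *v x)" unfolding neg by simp
    also have "\<dots> = (-\<mu>) *\<^sub>R x" using x(2) by simp
    finally show ?thesis .
  qed
  have "\<xi> \<bullet> (A *v \<xi>) \<le> (-\<mu>) * (\<xi> \<bullet> \<xi>)" for \<xi>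
  proof -
    have "\<mu> * (\<xi> \<bullet> \<xi>) \<le> \<xi> \<bullet> ((-A) *v \<xi>)" using r by blast
    also have "\<xi> \<bullet> ((-A) *v \<xi>) = - (\<xi> \<bullet> (A *v \<xi>))" unfolding neg by (rule inner_minus_right)
    finally show ?thesis by linarith
  qed
  thus ?thesis using 1 x(1) by blast
qed

lemma eig_finite:
  fixes A :: "real^'n^'n"
  assumes sym: "transpose A = A"
  shows "finite {c. \<exists>x. x \<noteq> 0 \<and> A *v x = c *\<^sub>R x}"
proof -
  let ?E = "{c. \<exists>x. x \<noteq> 0 \<and> A *v x = c *\<^sub>R x}"
  define f where "f c = (SOME x. x \<noteq> 0 \<and> A *v x = c *\<^sub>R x)" for c
  have fE: "f c \<noteq> 0 \<and> A *v f c = c *\<^sub>R f c" if "c \<in> ?E" for c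
  proof -
    have "\<exists>x. x \<noteq> 0 \<and> A *v x = c *\<^sub>R x" using that by blast
    thus ?thesis unfolding f_def by (rule someI_ex)
  qed
  have inj: "inj_on f ?E"
  proof (rule inj_onI)
    fix c d assume c: "c \<in> ?E" and d: "d \<in> ?E" and eq: "f c = f d"
    have "c *\<^sub>R f c = A *v f c" using fE[OF c] by metis
    also have "\<dots> = A *v f d" using eq by metis
    also have "\<dots> = d *\<^sub>R f d" using fE[OF d] by metis
    also have "\<dots> = d *\<^sub>R f c" using eq by metis
    finally have "(c - d) *\<^sub>R f c = 0" by (simp add: scaleR_diff_left)
    thus "c = d" using fE[OF c] by simp
  qed
  have orth: "pairwise orthogonal (f ` ?E)"
  unfolding pairwise_def orthogonal_def
  proof (intro ballI impI)
    fix p q assume "p \<in> f ` ?E" "q \<in> f ` ?E" and ne: "p \<noteq> q"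
    then obtain c d where c: "c \<in> ?E" and d: "d \<in> ?E" and pq: "p = f c" "q = f d" by blast
    have cd: "c \<noteq> d" using ne pq by metis
    have "c * (f c \<bullet> f d) = (A *v f c) \<bullet> f d" using fE[OF c] by (metis inner_scaleR_left)
    also have "\<dots> = f d \<bullet> (A *v f c)" by (rule inner_commute)
    also have "\<dots> = f c \<bullet> (A *v f d)" by (rule sym_inner[OF sym])
    also have "\<dots> = d * (f c \<bullet> f d)" using fE[OF d] by (metis inner_scaleR_right)
    finally have "(c - d) * (f c \<bullet> f d) = 0" by (simp add: left_diff_distrib)
    hence "f c \<bullet> f d = 0" using cd by simp
    thus "p \<bullet> q = 0" using pq by simp
  qed
  have "0 \<notin> f ` ?E"
  proof
    assume "0 \<in> f ` ?E"
    then obtain c where c: "c \<in> ?E" and "0 = f c" by blast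
    thus False using fE[OF c] by metis
  qed
  hence "independent (f ` ?E)" by (rule pairwise_orthogonal_independent[OF orth])
  hence "finite (f ` ?E)" by (rule independent_imp_finite)
  thus ?thesis by (rule finite_imageD[OF _ inj])
qed

lemma lambda_max_char:
  fixes A :: "real^'n^'n"
  assumes sym: "transpose A = A"
  shows "(\<exists>x. x \<noteq> 0 \<and> A *v x = lambda_max A *\<^sub>R x) \<and> (\<forall>\<xi>. \<xi> \<bullet> (A *v \<xi>) \<le> lambda_max A * (\<xi> \<bullet> \<xi>))"
proof -
  let ?E = "{c. \<exists>x. x \<noteq> 0 \<and> A *v x = c *\<^sub>R x}"
  obtain x \<mu> where x: "x \<noteq> 0" "A *v x = \<mu> *\<^sub>R x" and ray: "\<forall>\<xi>. \<xi> \<bullet> (A *v \<xi>) \<le> \<mu> * (\<xi> \<bullet> \<xi>)"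
    using max_eig[OF sym] by blast
  have fin: "finite ?E" by (rule eig_finite[OF sym])
  have muE: "\<mu> \<in> ?E" unfolding mem_Collect_eq by (rule exI[of _ x]) (simp add: x)
  have le: "c \<le> \<mu>" if cE: "c \<in> ?E" for c
  proof -
    obtain y where y: "y \<noteq> 0" "A *v y = c *\<^sub>R y" using cE unfolding mem_Collect_eq by blast
    have "c * (y \<bullet> y) = y \<bullet> (A *v y)" using y(2) by simp
    also have "\<dots> \<le> \<mu> * (y \<bullet> y)" using ray by blast
    finally have "c * (y \<bullet> y) \<le> \<mu> * (y \<bullet> y)" .
    moreover have "y \<bullet> y > 0" using y(1) by simp
    ultimately show ?thesis by (rule mult_right_le_imp_le)
  qed
  have lm: "lambda_max A = \<mu>" unfolding lambda_max_def
    by (rule Max_eqI[OF fin le muE])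
  show ?thesis unfolding lm using x ray by blast
qed

definition Sset :: "(real \<Rightarrow> real) \<Rightarrow> 'n::finite state set" where
"Sset e = {z. transpose (fst (snd (snd (snd z)))) = fst (snd (snd (snd z))) \<and> trace (fst (snd (snd (snd z)))) = 0
   \<and> -1 \<le> fst z \<and> fst z \<le> 1
   \<and> norm (fst (snd (snd z)) + fst (snd z)) \<le> sqrt (real CARD('n) * e 1) * (1 + fst z)
   \<and> norm (fst (snd (snd z)) - fst (snd z)) \<le> sqrt (real CARD('n) * e (-1)) * (1 - fst z)
   \<and> (\<forall>\<xi> k l. k * ((fst (snd (snd z)) + fst (snd z)) \<bullet> \<xi>) - k^2 * (1 + fst z) / 2
          + l * ((fst (snd (snd z)) - fst (snd z)) \<bullet> \<xi>) - l^2 * (1 - fst z) / 2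
        \<le> e (fst z) * (\<xi> \<bullet> \<xi>) + \<xi> \<bullet> (fst (snd (snd (snd z))) *v \<xi>))}"

definition hq :: "real \<Rightarrow> real \<Rightarrow> real" where
  "hq s al = (if s > 0 then al^2 / (2 * s) else 0)"

lemma hq_ge: assumes "s \<ge> 0" "s = 0 \<longrightarrow> al = 0" shows "k * al - k^2 * s / 2 \<le> hq s al"
proof (cases "s > 0")
  case True
  have "0 \<le> (al - k * s)^2 / (2 * s)" using True by simp
  also have "(al - k * s)^2 / (2 * s) = al^2/(2 * s) - (k * al - k^2 * s / 2)"
    using True by (simp add: field_simps power2_eq_square)
  finally show ?thesis using True by (simp add: hq_def)
next
  case False thus ?thesis using assms by (simp add: hq_def)
qed

lemma hq_eq: assumes "s \<ge> 0" "s = 0 \<longrightarrow> al = 0"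
  shows "(if s > 0 then al / s else 0) * al - (if s > 0 then al / s else 0)^2 * s / 2 = hq s al"
  using assms by (auto simp: hq_def field_simps power2_eq_square)

lemma hq_ge0: "hq s al \<ge> 0" by (simp add: hq_def)

lemma Sset_mem: "((\<rho>, v, m, \<sigma>, p) \<in> Sset e) \<longleftrightarrow>
   transpose \<sigma> = \<sigma> \<and> trace \<sigma> = 0 \<and> -1 \<le> \<rho> \<and> \<rho> \<le> 1
   \<and> norm (m + v) \<le> sqrt (real CARD('n) * e 1) * (1 + \<rho>)
   \<and> norm (m - v) \<le> sqrt (real CARD('n) * e (-1)) * (1 - \<rho>)
   \<and> (\<forall>\<xi> k l. k * ((m + v) \<bullet> \<xi>) - k^2 * (1 + \<rho>) / 2 + l * ((m - v) \<bullet> \<xi>) - l^2 * (1 - \<rho>) / 2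
        \<le> e \<rho> * (\<xi> \<bullet> \<xi>) + \<xi> \<bullet> (\<sigma> *v \<xi>))"
  for \<sigma> :: "real^'n::finite^'n"
  by (simp add: Sset_def)

lemma Sset_iff: "((\<rho>, v, m, \<sigma>, p) \<in> Sset e) \<longleftrightarrow>
   transpose \<sigma> = \<sigma> \<and> trace \<sigma> = 0 \<and> -1 \<le> \<rho> \<and> \<rho> \<le> 1
   \<and> norm (m + v) \<le> sqrt (real CARD('n) * e 1) * (1 + \<rho>)
   \<and> norm (m - v) \<le> sqrt (real CARD('n) * e (-1)) * (1 - \<rho>)
   \<and> (\<forall>\<xi>. hq (1 + \<rho>) ((m + v) \<bullet> \<xi>) + hq (1 - \<rho>) ((m - v) \<bullet> \<xi>)
        \<le> e \<rho> * (\<xi> \<bullet> \<xi>) + \<xi> \<bullet> (\<sigma> *v \<xi>))"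
  for \<sigma> :: "real^'n::finite^'n"
proof -
  have side: "(-1 \<le> \<rho> \<and> \<rho> \<le> 1 \<and> norm (m + v) \<le> sqrt (real CARD('n) * e 1) * (1 + \<rho>)
      \<and> norm (m - v) \<le> sqrt (real CARD('n) * e (-1)) * (1 - \<rho>)) \<Longrightarrow>
      (1 + \<rho> \<ge> 0 \<and> (1 + \<rho> = 0 \<longrightarrow> (m + v) \<bullet> \<xi> = 0)) \<and> (1 - \<rho> \<ge> 0 \<and> (1 - \<rho> = 0 \<longrightarrow> (m - v) \<bullet> \<xi> = 0))" for \<xi>
    by auto
  show ?thesis
  proof
    assume H: "(\<rho>, v, m, \<sigma>, p) \<in> Sset e"
    note H' = H[unfolded Sset_mem]
    have "hq (1 + \<rho>) ((m + v) \<bullet> \<xi>) + hq (1 - \<rho>) ((m - v) \<bullet> \<xi>) \<le> e \<rho> * (\<xi> \<bullet> \<xi>) + \<xi> \<bullet> (\<sigma> *v \<xi>)" for \<xi>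
    proof -
      have s: "1 + \<rho> \<ge> 0 \<and> (1 + \<rho> = 0 \<longrightarrow> (m + v) \<bullet> \<xi> = 0)" "1 - \<rho> \<ge> 0 \<and> (1 - \<rho> = 0 \<longrightarrow> (m - v) \<bullet> \<xi> = 0)"
        using side[of \<xi>] H' by blast+
      have "hq (1 + \<rho>) ((m + v) \<bullet> \<xi>) + hq (1 - \<rho>) ((m - v) \<bullet> \<xi>) = 
        (if 1 + \<rho> > 0 then ((m + v) \<bullet> \<xi>) / (1 + \<rho>) else 0) * ((m + v) \<bullet> \<xi>) - (if 1 + \<rho> > 0 then ((m + v) \<bullet> \<xi>) / (1 + \<rho>) else 0)^2 * (1 + \<rho>) / 2
        + ((if 1 - \<rho> > 0 then ((m - v) \<bullet> \<xi>) / (1 - \<rho>) else 0) * ((m - v) \<bullet> \<xi>) - (if 1 - \<rho> > 0 then ((m - v) \<bullet> \<xi>) / (1 - \<rho>) else 0)^2 * (1 - \<rho>) / 2)"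
        using hq_eq[of "1 + \<rho>" "(m + v) \<bullet> \<xi>"] hq_eq[of "1 - \<rho>" "(m - v) \<bullet> \<xi>"] s by simp
      also have "\<dots> \<le> e \<rho> * (\<xi> \<bullet> \<xi>) + \<xi> \<bullet> (\<sigma> *v \<xi>)"
      proof -
        have all: "\<forall>\<xi> k l. k * ((m + v) \<bullet> \<xi>) - k^2 * (1 + \<rho>) / 2 + l * ((m - v) \<bullet> \<xi>) - l^2 * (1 - \<rho>) / 2
        \<le> e \<rho> * (\<xi> \<bullet> \<xi>) + \<xi> \<bullet> (\<sigma> *v \<xi>)" using H' by blast
        show ?thesis using all[rule_format, of "if 1 + \<rho> > 0 then ((m + v) \<bullet> \<xi>) / (1 + \<rho>) else 0" \<xi> "if 1 - \<rho> > 0 then ((m - v) \<bullet> \<xi>) / (1 - \<rho>) else 0"]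
          by linarith
      qed
      finally show ?thesis .
    qed
    thus "transpose \<sigma> = \<sigma> \<and> trace \<sigma> = 0 \<and> -1 \<le> \<rho> \<and> \<rho> \<le> 1
   \<and> norm (m + v) \<le> sqrt (real CARD('n) * e 1) * (1 + \<rho>)
   \<and> norm (m - v) \<le> sqrt (real CARD('n) * e (-1)) * (1 - \<rho>)
   \<and> (\<forall>\<xi>. hq (1 + \<rho>) ((m + v) \<bullet> \<xi>) + hq (1 - \<rho>) ((m - v) \<bullet> \<xi>)
        \<le> e \<rho> * (\<xi> \<bullet> \<xi>) + \<xi> \<bullet> (\<sigma> *v \<xi>))" using H' by blast
  next
    assume H: "transpose \<sigma> = \<sigma> \<and> trace \<sigma> = 0 \<and> -1 \<le> \<rho> \<and> \<rho> \<le> 1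
   \<and> norm (m + v) \<le> sqrt (real CARD('n) * e 1) * (1 + \<rho>)
   \<and> norm (m - v) \<le> sqrt (real CARD('n) * e (-1)) * (1 - \<rho>)
   \<and> (\<forall>\<xi>. hq (1 + \<rho>) ((m + v) \<bullet> \<xi>) + hq (1 - \<rho>) ((m - v) \<bullet> \<xi>)
        \<le> e \<rho> * (\<xi> \<bullet> \<xi>) + \<xi> \<bullet> (\<sigma> *v \<xi>))"
    have "k * ((m + v) \<bullet> \<xi>) - k^2 * (1 + \<rho>) / 2 + l * ((m - v) \<bullet> \<xi>) - l^2 * (1 - \<rho>) / 2
        \<le> e \<rho> * (\<xi> \<bullet> \<xi>) + \<xi> \<bullet> (\<sigma> *v \<xi>)" for \<xi> k l
    proof -
      have s: "1 + \<rho> \<ge> 0 \<and> (1 + \<rho> = 0 \<longrightarrow> (m + v) \<bullet> \<xi> = 0)" "1 - \<rho> \<ge> 0 \<and> (1 - \<rho> = 0 \<longrightarrow> (m - v) \<bullet> \<xi> = 0)"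
        using side[of \<xi>] H by blast+
      have "k * ((m + v) \<bullet> \<xi>) - k^2 * (1 + \<rho>) / 2 \<le> hq (1 + \<rho>) ((m + v) \<bullet> \<xi>)"
        using hq_ge s(1) by blast
      moreover have "l * ((m - v) \<bullet> \<xi>) - l^2 * (1 - \<rho>) / 2 \<le> hq (1 - \<rho>) ((m - v) \<bullet> \<xi>)"
        using hq_ge s(2) by blast
      moreover have "hq (1 + \<rho>) ((m + v) \<bullet> \<xi>) + hq (1 - \<rho>) ((m - v) \<bullet> \<xi>) \<le> e \<rho> * (\<xi> \<bullet> \<xi>) + \<xi> \<bullet> (\<sigma> *v \<xi>)"
        using H by blast
      ultimately show ?thesis by linarith
    qed
    thus "(\<rho>, v, m, \<sigma>, p) \<in> Sset e" unfolding Sset_mem using H by blast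
  qed
qed

definition Pmat :: "(real \<Rightarrow> real) \<Rightarrow> 'n::finite state \<Rightarrow> real^'n^'n" where
"Pmat e z = (case z of (\<rho>, v, m, \<sigma>, p) \<Rightarrow> e \<rho> *\<^sub>R mat 1 + \<sigma>
   - (if 1 + \<rho> > 0 then (1 / (2 * (1 + \<rho>))) *\<^sub>R outer (m + v) (m + v) else 0)
   - (if 1 - \<rho> > 0 then (1 / (2 * (1 - \<rho>))) *\<^sub>R outer (m - v) (m - v) else 0))"

lemma inner_outer: "\<xi> \<bullet> (outer a a *v \<xi>) = (a \<bullet> \<xi>)^2"
  by (simp add: outer_mv power2_eq_square inner_commute)

lemma quad_ifterm: "\<xi> \<bullet> ((if s > 0 then (1 / (2 * s)) *\<^sub>R outer a a else 0) *v \<xi>) = hq s (a \<bullet> \<xi>)"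
  by (simp add: hq_def scaleR_matrix_vector_assoc[symmetric] inner_outer)

lemma quadP: "\<xi> \<bullet> (Pmat e (\<rho>, v, m, \<sigma>, p) *v \<xi>) = e \<rho> * (\<xi> \<bullet> \<xi>) + \<xi> \<bullet> (\<sigma> *v \<xi>) - hq (1 + \<rho>) ((m + v) \<bullet> \<xi>) - hq (1 - \<rho>) ((m - v) \<bullet> \<xi>)"
proof -
  have "\<xi> \<bullet> (Pmat e (\<rho>, v, m, \<sigma>, p) *v \<xi>) = \<xi> \<bullet> ((e \<rho> *\<^sub>R mat 1) *v \<xi>) + \<xi> \<bullet> (\<sigma> *v \<xi>)
     - \<xi> \<bullet> ((if 1 + \<rho> > 0 then (1 / (2 * (1 + \<rho>))) *\<^sub>R outer (m + v) (m + v) else 0) *v \<xi>)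
     - \<xi> \<bullet> ((if 1 - \<rho> > 0 then (1 / (2 * (1 - \<rho>))) *\<^sub>R outer (m - v) (m - v) else 0) *v \<xi>)"
    unfolding Pmat_def by (simp add: matrix_vector_mult_add_rdistrib matrix_vector_mult_diff_rdistrib inner_add_right inner_diff_right)
  also have "\<xi> \<bullet> ((e \<rho> *\<^sub>R mat 1) *v \<xi>) = e \<rho> * (\<xi> \<bullet> \<xi>)"
    by (simp add: scaleR_matrix_vector_assoc[symmetric])
  finally show ?thesis unfolding quad_ifterm .
qed

lemma transpose_if: "transpose (if b then A else (0::real^'n^'n)) = (if b then transpose A else 0)"
  by (simp add: vec_eq_iff transpose_def)

lemma sym_P: assumes "transpose \<sigma> = \<sigma>" shows "transpose (Pmat e (\<rho>, v, m, \<sigma>, p)) = Pmat e (\<rho>, v, m, \<sigma>, p)"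
  unfolding Pmat_def using assms
  by (simp add: transpose_add' transpose_diff' transpose_scaleR' transpose_mat' transpose_if transpose_outer)

lemma trace_if: "trace (if b then A else (0::real^'n^'n)) = (if b then trace A else 0)"
  by (simp add: trace_def)

lemma trace_P: fixes \<sigma> :: "real^'n::finite^'n" assumes "trace \<sigma> = 0"
  shows "trace (Pmat e (\<rho>, v, m, \<sigma>, p)) = real CARD('n) * e \<rho> - hq (1 + \<rho>) (norm (m + v)) - hq (1 - \<rho>) (norm (m - v))"
  unfolding Pmat_def using assms
  by (simp add: trace_add trace_sub trace_scaleR trace_I trace_if trace_outer hq_def dot_square_norm)

lemma psd_P: assumes "(\<rho>, v, m, \<sigma>, p) \<in> Sset e" shows "\<xi> \<bullet> (Pmat e (\<rho>, v, m, \<sigma>, p) *v \<xi>) \<ge> 0"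
  using assms unfolding quadP Sset_iff by (smt (verit))

lemma quadM_scalar: assumes "-1 < \<rho>" "\<rho> < 1"
  shows "(1 / (1 - \<rho>^2)) * (V^2 - \<rho> * (2 * M * V) + M^2) = hq (1 + \<rho>) (M + V) + hq (1 - \<rho>) (M - V)"
proof -
  have a: "1 + \<rho> > 0" "1 - \<rho> > 0" using assms by auto
  have b: "1 - \<rho>^2 = (1 + \<rho>) * (1 - \<rho>)" by (simp add: algebra_simps power2_eq_square)
  have nz1: "(2 * (1 + \<rho>)) * (2 * (1 - \<rho>)) \<noteq> 0" using a by simp
  have nz2: "(1 + \<rho>) * (1 - \<rho>) \<noteq> 0" using a by simp
  have "(1 / (1 - \<rho>^2)) * (V^2 - \<rho> * (2 * M * V) + M^2) = (V^2 - \<rho> * (2 * M * V) + M^2) / ((1 + \<rho>) * (1 - \<rho>))"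
    unfolding b by simp
  also have "\<dots> = ((M + V)^2 * (2 * (1 - \<rho>)) + (M - V)^2 * (2 * (1 + \<rho>))) / ((2 * (1 + \<rho>)) * (2 * (1 - \<rho>)))"
    unfolding frac_eq_eq[OF nz2 nz1] by (simp add: algebra_simps power2_eq_square)
  also have "\<dots> = (M + V)^2 / (2 * (1 + \<rho>)) + (M - V)^2 / (2 * (1 - \<rho>))"
    using a by (simp add: add_frac_eq)
  finally show ?thesis using a by (simp add: hq_def)
qed

lemma quadM: assumes "-1 < \<rho>" "\<rho> < 1"
  shows "\<xi> \<bullet> (Mmat (\<rho>, v, m, \<sigma>, p) *v \<xi>) = hq (1 + \<rho>) ((m + v) \<bullet> \<xi>) + hq (1 - \<rho>) ((m - v) \<bullet> \<xi>) - \<xi> \<bullet> (\<sigma> *v \<xi>)"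
proof -
  have "\<xi> \<bullet> (Mmat (\<rho>, v, m, \<sigma>, p) *v \<xi>) = (1 / (1 - \<rho>^2)) * ((v \<bullet> \<xi>)^2 - \<rho> * (2 * (m \<bullet> \<xi>) * (v \<bullet> \<xi>)) + (m \<bullet> \<xi>)^2) - \<xi> \<bullet> (\<sigma> *v \<xi>)"
    unfolding Mmat_def
    by (simp add: matrix_vector_mult_add_rdistrib matrix_vector_mult_diff_rdistrib inner_add_right inner_diff_right
        scaleR_matrix_vector_assoc[symmetric] outer_mv inner_commute power2_eq_square algebra_simps)
  also have "\<dots> = hq (1 + \<rho>) ((m \<bullet> \<xi>) + (v \<bullet> \<xi>)) + hq (1 - \<rho>) ((m \<bullet> \<xi>) - (v \<bullet> \<xi>)) - \<xi> \<bullet> (\<sigma> *v \<xi>)"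
    using quadM_scalar[OF assms] by simp
  finally show ?thesis by (simp add: inner_add_left inner_diff_left)
qed

lemma sym_M: assumes "transpose \<sigma> = \<sigma>" shows "transpose (Mmat (\<rho>, v, m, \<sigma>, p)) = Mmat (\<rho>, v, m, \<sigma>, p)"
  unfolding Mmat_def using assms
  by (simp add: transpose_add' transpose_diff' transpose_scaleR' transpose_outer add.commute)

lemma cont_transpose[continuous_intros]:
  fixes f :: "'a::topological_space \<Rightarrow> real^'n^'m"
  shows "continuous_on S f \<Longrightarrow> continuous_on S (\<lambda>x. transpose (f x))"
  unfolding transpose_def by (intro continuous_intros)

lemma cont_trace[continuous_intros]:
  fixes f :: "'a::topological_space \<Rightarrow> real^'n^'n"
  shows "continuous_on S f \<Longrightarrow> continuous_on S (\<lambda>x. trace (f x))"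
  unfolding trace_def by (intro continuous_intros)

lemma cont_mv[continuous_intros]:
  fixes f :: "'a::topological_space \<Rightarrow> real^'n^'m"
  shows "continuous_on S f \<Longrightarrow> continuous_on S (\<lambda>x. f x *v \<xi>)"
  unfolding matrix_vector_mult_def by (intro continuous_intros)

lemma closed_S:
  assumes aff: "\<exists>A B. \<forall>r. e r = A * r + B"
  shows "closed (Sset e :: 'n::finite state set)"
proof -
  obtain A B where eAB: "\<And>r. e r = A * r + B" using aff by blast
  have ee: "e = (\<lambda>r. A * r + B)" using eAB by auto
  show ?thesis unfolding Sset_def ee
    apply (intro closed_Collect_conj)
    apply (rule closed_Collect_eq; intro continuous_intros)
    apply (rule closed_Collect_eq; intro continuous_intros)
    apply (rule closed_Collect_le; intro continuous_intros)+
    apply (rule closed_Collect_all, rule closed_Collect_all, rule closed_Collect_all)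
    apply (rule closed_Collect_le; intro continuous_intros; simp)
    done
qed

lemma sq_bound:
  fixes x c N E :: real
  assumes "x \<ge> 0" "c > 0" "N > 0" "x^2 / (N * c^2) < E"
  shows "x \<le> sqrt (N * E) * c"
proof -
  have "x^2 < E * (N * c^2)" using assms by (simp add: divide_less_eq)
  hence "x^2 \<le> (N * E) * c^2" by (simp add: algebra_simps)
  hence "x \<le> sqrt ((N * E) * c^2)" by (rule real_le_rsqrt)
  also have "\<dots> = sqrt (N * E) * c" using assms(2) by (simp add: real_sqrt_mult)
  finally show ?thesis .
qed

lemma sq_bound2:
  fixes x c N E :: real
  assumes "x \<ge> 0" "c > 0" "N > 0" "E > 0" "x < sqrt (N * E) * c"
  shows "x^2 / (N * c^2) < E"
proof -
  have "x^2 < (sqrt (N * E) * c)^2" using assms by (intro power_strict_mono) auto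
  also have "\<dots> = N * E * c^2" using assms by (simp add: power_mult_distrib)
  finally have "x^2 < E * (N * c^2)" by (simp add: algebra_simps)
  thus ?thesis using assms by (simp add: divide_less_eq)
qed

lemma e_affine_conv:
  fixes e :: "real \<Rightarrow> real"
  assumes "\<exists>A B. \<forall>r. e r = A * r + B"
  shows "e r = e 1 * (1 + r) / 2 + e (-1) * (1 - r) / 2" and "e (c * r) = c * e r + (1 - c) * e 0"
    and "e 0 = (e 1 + e (-1)) / 2"
  using assms by (auto simp: field_simps)

lemma U_sub_S:
  assumes aff: "\<exists>A B. \<forall>r. e r = A * r + B" and pos1: "e 1 > 0" and posm1: "e (-1) > 0"
  shows "Uset e \<subseteq> (Sset e :: 'n::finite state set)"
proof
  fix z :: "'n state" assume zU: "z \<in> Uset e"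
  obtain \<rho> v m \<sigma> p where z: "z = (\<rho>, v, m, \<sigma>, p)" by (cases z) auto
  have H: "transpose \<sigma> = \<sigma>" "trace \<sigma> = 0" "-1 < \<rho>" "\<rho> < 1" "Tplus z < e 1" "Tminus z < e (-1)" "Qf z < e \<rho>"
    using zU unfolding Uset_def Zset_def z by auto
  have N: "real CARD('n) > 0" by simp
  have C1: "norm (m + v) \<le> sqrt (real CARD('n) * e 1) * (1 + \<rho>)"
  proof (rule sq_bound)
    show "(norm (m + v))^2 / (real CARD('n) * (1 + \<rho>)^2) < e 1"
      using H(5) unfolding Tplus_def z by (simp add: add.commute)
  qed (use H N in auto)
  have C2: "norm (m - v) \<le> sqrt (real CARD('n) * e (-1)) * (1 - \<rho>)"
  proof (rule sq_bound)
    show "(norm (m - v))^2 / (real CARD('n) * (1 - \<rho>)^2) < e (-1)"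
      using H(6) unfolding Tminus_def z by (simp add: power2_commute)
  qed (use H N in auto)
  have Q: "hq (1 + \<rho>) ((m + v) \<bullet> \<xi>) + hq (1 - \<rho>) ((m - v) \<bullet> \<xi>) \<le> e \<rho> * (\<xi> \<bullet> \<xi>) + \<xi> \<bullet> (\<sigma> *v \<xi>)" for \<xi>
  proof -
    have "\<xi> \<bullet> (Mmat z *v \<xi>) \<le> lambda_max (Mmat z) * (\<xi> \<bullet> \<xi>)"
      using lambda_max_char[OF sym_M[OF H(1)]] unfolding z by blast
    also have "\<dots> \<le> e \<rho> * (\<xi> \<bullet> \<xi>)"
      using H(7) unfolding Qf_def by (intro mult_right_mono) auto
    finally show ?thesis unfolding z quadM[OF H(3) H(4)] by simp
  qed
  show "z \<in> Sset e" unfolding z Sset_iff using H C1 C2 Q by auto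
qed

lemma hq_scale:
  fixes c \<rho> al :: real
  assumes c: "0 \<le> c" "c \<le> 1" and r: "-1 \<le> \<rho>" "\<rho> \<le> 1" and sc: "1 + c * \<rho> > 0"
  shows "hq (1 + c * \<rho>) (c * al) \<le> c * ((c * al / (1 + c * \<rho>)) * al - (c * al / (1 + c * \<rho>))^2 * (1 + \<rho>) / 2)"
proof -
  define S where "S = 1 + c * \<rho>"
  have Sp: "S > 0" using sc S_def by simp
  have "c * ((c * al / S) * al - (c * al / S)^2 * (1 + \<rho>) / 2) - hq S (c * al)
      = c^2 * al^2 * (2 * S - c * (1 + \<rho>) - S) / (2 * S^2)"
    using Sp unfolding hq_def by (simp add: field_simps power2_eq_square)
  also have "2 * S - c * (1 + \<rho>) - S = 1 - c" unfolding S_def by (simp add: algebra_simps)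
  also have "c^2 * al^2 * (1 - c) / (2 * S^2) \<ge> 0" using c by simp
  finally show ?thesis unfolding S_def by simp
qed

lemma scale_in_U:
  fixes e :: "real \<Rightarrow> real"
  assumes aff: "\<exists>A B. \<forall>r. e r = A * r + B" and pos1: "e 1 > 0" and posm1: "e (-1) > 0"
    and c: "0 \<le> c" "c < 1" and y: "(\<rho>, v, m, \<sigma>, p) \<in> (Sset e :: 'n::finite state set)"
  shows "c *\<^sub>R (\<rho>, v, m, \<sigma>, p) \<in> Uset e"
proof -
  note Y = y[unfolded Sset_mem]
  have r: "-1 \<le> \<rho>" "\<rho> \<le> 1" using Y by auto
  have cr: "-1 < c * \<rho>" "c * \<rho> < 1"
  proof -
    have "\<bar>c * \<rho>\<bar> \<le> c" using c r by (simp add: abs_mult mult_left_le abs_le_iff)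
    thus "-1 < c * \<rho>" "c * \<rho> < 1" using c by auto
  qed
  have N: "real CARD('n) > 0" by simp
  have sc: "1 + c * \<rho> > 0" "1 - c * \<rho> > 0" using cr by auto
  have T1: "(norm (c *\<^sub>R m + c *\<^sub>R v))^2 / (real CARD('n) * (1 + c * \<rho>)^2) < e 1"
  proof (rule sq_bound2)
    have "norm (c *\<^sub>R m + c *\<^sub>R v) = c * norm (m + v)" using c by (simp add: scaleR_add_right[symmetric])
    also have "\<dots> \<le> c * (sqrt (real CARD('n) * e 1) * (1 + \<rho>))" using Y c by (intro mult_left_mono) auto
    also have "\<dots> < sqrt (real CARD('n) * e 1) * (1 + c * \<rho>)"
    proof -
      have "c * (1 + \<rho>) < 1 + c * \<rho>" using c by (simp add: algebra_simps)
      moreover have "sqrt (real CARD('n) * e 1) > 0" using pos1 by simp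
      ultimately show ?thesis by (simp add: mult.left_commute)
    qed
    finally show "norm (c *\<^sub>R m + c *\<^sub>R v) < sqrt (real CARD('n) * e 1) * (1 + c * \<rho>)" .
  qed (use sc pos1 in auto)
  have T2: "(norm (c *\<^sub>R m - c *\<^sub>R v))^2 / (real CARD('n) * (1 - c * \<rho>)^2) < e (-1)"
  proof (rule sq_bound2)
    have "norm (c *\<^sub>R m - c *\<^sub>R v) = c * norm (m - v)" using c by (simp add: scaleR_diff_right[symmetric])
    also have "\<dots> \<le> c * (sqrt (real CARD('n) * e (-1)) * (1 - \<rho>))" using Y c by (intro mult_left_mono) auto
    also have "\<dots> < sqrt (real CARD('n) * e (-1)) * (1 - c * \<rho>)"
    proof -
      have "c * (1 - \<rho>) < 1 - c * \<rho>" using c by (simp add: algebra_simps)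
      moreover have "sqrt (real CARD('n) * e (-1)) > 0" using posm1 by simp
      ultimately show ?thesis by (simp add: mult.left_commute)
    qed
    finally show "norm (c *\<^sub>R m - c *\<^sub>R v) < sqrt (real CARD('n) * e (-1)) * (1 - c * \<rho>)" .
  qed (use sc posm1 in auto)
  have symc: "transpose (c *\<^sub>R \<sigma>) = c *\<^sub>R \<sigma>" using Y by (simp add: transpose_scaleR')
  obtain x where x: "x \<noteq> 0" "Mmat (c * \<rho>, c *\<^sub>R v, c *\<^sub>R m, c *\<^sub>R \<sigma>, c * p) *v x
        = lambda_max (Mmat (c * \<rho>, c *\<^sub>R v, c *\<^sub>R m, c *\<^sub>R \<sigma>, c * p)) *\<^sub>R x"
    using lambda_max_char[OF sym_M[OF symc]] by blast
  define L where "L = lambda_max (Mmat (c * \<rho>, c *\<^sub>R v, c *\<^sub>R m, c *\<^sub>R \<sigma>, c * p))"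
  define al where "al = (m + v) \<bullet> x"
  define be where "be = (m - v) \<bullet> x"
  define k where "k = c * al / (1 + c * \<rho>)"
  define l where "l = c * be / (1 + c * (-\<rho>))"
  have xx: "x \<bullet> x > 0" using x by simp
  have "L * (x \<bullet> x) = x \<bullet> (Mmat (c * \<rho>, c *\<^sub>R v, c *\<^sub>R m, c *\<^sub>R \<sigma>, c * p) *v x)"
    using x(2) unfolding L_def by simp
  also have "\<dots> = hq (1 + c * \<rho>) (c * al) + hq (1 - c * \<rho>) (c * be) - c * (x \<bullet> (\<sigma> *v x))"
    unfolding quadM[OF cr] al_def be_def
    by (simp add: scaleR_add_right[symmetric] scaleR_diff_right[symmetric] scaleR_matrix_vector_assoc[symmetric])
  also have "\<dots> \<le> c * (k * al - k^2 * (1 + \<rho>) / 2) + c * (l * be - l^2 * (1 - \<rho>) / 2) - c * (x \<bullet> (\<sigma> *v x))"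
  proof -
    have "hq (1 + c * \<rho>) (c * al) \<le> c * (k * al - k^2 * (1 + \<rho>) / 2)"
      unfolding k_def by (rule hq_scale) (use c r sc in auto)
    moreover have "hq (1 + c * (-\<rho>)) (c * be) \<le> c * (l * be - l^2 * (1 + (-\<rho>)) / 2)"
      unfolding l_def by (rule hq_scale) (use c r sc in auto)
    ultimately show ?thesis by simp
  qed
  also have "\<dots> = c * (k * al - k^2 * (1 + \<rho>) / 2 + l * be - l^2 * (1 - \<rho>) / 2 - x \<bullet> (\<sigma> *v x))"
    by (simp add: algebra_simps)
  also have "\<dots> \<le> c * (e \<rho> * (x \<bullet> x))"
  proof -
    have "k * al - k^2 * (1 + \<rho>) / 2 + l * be - l^2 * (1 - \<rho>) / 2 \<le> e \<rho> * (x \<bullet> x) + x \<bullet> (\<sigma> *v x)"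
      using Y unfolding al_def be_def by blast
    thus ?thesis using c by (intro mult_left_mono) auto
  qed
  also have "\<dots> < e (c * \<rho>) * (x \<bullet> x)"
  proof -
    have e0: "e 0 > 0" using e_affine_conv(3)[OF aff] pos1 posm1 by simp
    have "e (c * \<rho>) * (x \<bullet> x) = c * (e \<rho> * (x \<bullet> x)) + (1 - c) * e 0 * (x \<bullet> x)"
      unfolding e_affine_conv(2)[OF aff, of c \<rho>] by (simp add: algebra_simps)
    moreover have "(1 - c) * e 0 * (x \<bullet> x) > 0" using c e0 xx by simp
    ultimately show ?thesis by simp
  qed
  finally have "L < e (c * \<rho>)" using xx by simp
  show ?thesis
    unfolding Uset_def Zset_def Tplus_def Tminus_def Qf_def
    using Y cr T1 T2 \<open>L < e (c * \<rho>)\<close> unfolding L_def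
    by (simp add: transpose_scaleR' trace_scaleR power2_commute[of "c * \<rho>" 1] add.commute[of "c * \<rho>" 1])
qed

lemma S_sub_clU:
  fixes e :: "real \<Rightarrow> real"
  assumes aff: "\<exists>A B. \<forall>r. e r = A * r + B" and pos1: "e 1 > 0" and posm1: "e (-1) > 0"
  shows "(Sset e :: 'n::finite state set) \<subseteq> closure (Uset e)"
proof
  fix y :: "'n state" assume yS: "y \<in> Sset e"
  obtain \<rho> v m \<sigma> p where y: "y = (\<rho>, v, m, \<sigma>, p)" by (cases y) auto
  define X where "X k = (1 - 1 / real (k + 2)) *\<^sub>R y" for k
  have XU: "X k \<in> Uset e" for k
    unfolding X_def y by (rule scale_in_U[OF aff pos1 posm1]) (use yS y in auto)
  have "(\<lambda>k. 1 / real (k + 2)) \<longlonglongrightarrow> 0"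
    using LIMSEQ_ignore_initial_segment[OF lim_1_over_n, of 2] by simp
  hence "(\<lambda>k. 1 - 1 / real (k + 2)) \<longlonglongrightarrow> 1 - 0" by (intro tendsto_diff tendsto_const)
  hence "X \<longlonglongrightarrow> (1 - 0) *\<^sub>R y" unfolding X_def by (intro tendsto_scaleR tendsto_const)
  hence "X \<longlonglongrightarrow> y" by simp
  thus "y \<in> closure (Uset e)" unfolding closure_sequential using XU by blast
qed

lemma clU_eq:
  fixes e :: "real \<Rightarrow> real"
  assumes aff: "\<exists>A B. \<forall>r. e r = A * r + B" and pos1: "e 1 > 0" and posm1: "e (-1) > 0"
  shows "closure (Uset e) = (Sset e :: 'n::finite state set)"
proof
  show "closure (Uset e) \<subseteq> Sset e"
    using closure_minimal[OF U_sub_S[OF aff pos1 posm1] closed_S[OF aff]] .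
  show "Sset e \<subseteq> closure (Uset e)" by (rule S_sub_clU[OF aff pos1 posm1])
qed

lemma axis_quad: "axis i (1::real) \<bullet> (A *v axis j 1) = A $ i $ j"
  by (simp add: matrix_vector_mult_basis inner_axis' column_def)

lemma sym_entry: "transpose (A::real^'n^'n) = A \<Longrightarrow> A $ j $ i = A $ i $ j"
  by (metis transpose_def vec_lambda_beta)

lemma entry_bound:
  fixes \<sigma> :: "real^'n::finite^'n"
  assumes sym: "transpose \<sigma> = \<sigma>" and tr: "trace \<sigma> = 0" and E: "E \<ge> 0"
    and q: "\<And>\<xi>. \<xi> \<bullet> (\<sigma> *v \<xi>) \<ge> - E * (\<xi> \<bullet> \<xi>)"
  shows "\<bar>\<sigma> $ i $ j\<bar> \<le> (real CARD('n) + 1) * E"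
proof -
  have dlow: "\<sigma> $ k $ k \<ge> -E" for k
    using q[of "axis k 1"] by (simp add: axis_quad inner_axis_axis)
  have dup: "\<sigma> $ k $ k \<le> real CARD('n) * E" for k
  proof -
    have "(\<Sum>j\<in>UNIV. \<sigma> $ j $ j + E) = real CARD('n) * E"
      using tr by (simp add: sum.distrib trace_def)
    moreover have "\<sigma> $ k $ k + E \<le> (\<Sum>j\<in>UNIV. \<sigma> $ j $ j + E)"
    proof (rule member_le_sum)
      fix j show "0 \<le> \<sigma> $ j $ j + E" using dlow[of j] by linarith
    qed auto
    ultimately show ?thesis using E by linarith
  qed
  show ?thesis
  proof (cases "i = j")
    case True
    have "real CARD('n) * E \<ge> 0" using E by simp
    moreover have "(real CARD('n) + 1) * E = real CARD('n) * E + E" by (simp add: algebra_simps)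
    ultimately have "\<sigma> $ j $ j \<le> (real CARD('n) + 1) * E" "- \<sigma> $ j $ j \<le> (real CARD('n) + 1) * E"
      using dlow[of j] dup[of j] E by linarith+
    thus ?thesis unfolding True abs_le_iff by blast
  next
    case False
    have aa: "axis i (1::real) \<bullet> axis j 1 = 0" "axis j (1::real) \<bullet> axis i 1 = 0" using False by (auto simp: inner_axis_axis)
    have ex: "(axis i 1 + t *\<^sub>R axis j 1) \<bullet> (\<sigma> *v (axis i 1 + t *\<^sub>R axis j 1)) = \<sigma> $ i $ i + 2 * t * \<sigma> $ i $ j + t^2 * \<sigma> $ j $ j" for t
      using quad_expand[OF sym, of "axis i 1" t "axis j 1"] sym_entry[OF sym, of j i] by (simp add: axis_quad)
    have nn: "(axis i 1 + t *\<^sub>R axis j 1) \<bullet> (axis i 1 + t *\<^sub>R axis j (1::real)) = 1 + t^2" for t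
      using aa by (simp add: inner_add_left inner_add_right inner_axis_axis power2_eq_square)
    have p: "\<sigma> $ i $ i + 2 * \<sigma> $ i $ j + \<sigma> $ j $ j \<ge> - E * 2"
      using q[of "axis i 1 + 1 *\<^sub>R axis j 1"] ex[of 1] nn[of 1] by simp
    have m: "\<sigma> $ i $ i - 2 * \<sigma> $ i $ j + \<sigma> $ j $ j \<ge> - E * 2"
      using q[of "axis i 1 + (-1) *\<^sub>R axis j 1"] ex[of "-1"] nn[of "-1"] by simp
    show ?thesis using p m dup[of i] dup[of j] by (simp add: abs_le_iff algebra_simps)
  qed
qed

lemma norm_mat_bound:
  fixes \<sigma> :: "real^'n::finite^'n"
  assumes "\<And>i j. \<bar>\<sigma> $ i $ j\<bar> \<le> B"
  shows "norm \<sigma> \<le> real CARD('n) * (real CARD('n) * B)"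
proof -
  have "norm \<sigma> \<le> (\<Sum>i\<in>UNIV. norm (\<sigma> $ i))"
    unfolding norm_vec_def by (rule L2_set_le_sum) simp
  also have "\<dots> \<le> (\<Sum>i\<in>UNIV. (\<Sum>j\<in>UNIV. \<bar>\<sigma> $ i $ j\<bar>))"
    by (intro sum_mono norm_le_l1_cart)
  also have "\<dots> \<le> real CARD('n) * (real CARD('n) * B)"
  proof -
    have r: "(\<Sum>j\<in>UNIV. \<bar>\<sigma> $ i $ j\<bar>) \<le> real CARD('n) * B" for i
      using sum_bounded_above[of UNIV "\<lambda>j. \<bar>\<sigma> $ i $ j\<bar>" B] assms by simp
    show ?thesis using sum_bounded_above[of UNIV "\<lambda>i. (\<Sum>j\<in>UNIV. \<bar>\<sigma> $ i $ j\<bar>)" "real CARD('n) * B"] r by simp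
  qed
  finally show ?thesis .
qed

lemma bounded_projS:
  fixes e :: "real \<Rightarrow> real"
  assumes aff: "\<exists>A B. \<forall>r. e r = A * r + B" and pos1: "e 1 > 0" and posm1: "e (-1) > 0"
  shows "bounded (proj ` (Sset e :: 'n::finite state set))"
proof -
  define E where "E = \<bar>e 1\<bar> + \<bar>e (-1)\<bar>"
  define N where "N = real CARD('n)"
  define K where "K = sqrt (N * e 1) * 2 + sqrt (N * e (-1)) * 2"
  define Bd where "Bd = 1 + K + K + N * (N * ((N + 1) * E))"
  have E0: "E \<ge> 0" unfolding E_def by simp
  have "norm w \<le> Bd" if wP: "w \<in> proj ` (Sset e :: 'n state set)" for w
  proof -
    obtain z where zS: "z \<in> Sset e" and w: "w = proj z" using wP by blast
    obtain \<rho> v m \<sigma> p where z: "z = (\<rho>, v, m, \<sigma>, p)" by (cases z) auto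
    note Z = zS[unfolded z Sset_mem]
    have r: "-1 \<le> \<rho>" "\<rho> \<le> 1" using Z by auto
    have eb: "e \<rho> \<le> E"
    proof -
      have "e \<rho> = e 1 * (1 + \<rho>) / 2 + e (-1) * (1 - \<rho>) / 2" by (rule e_affine_conv(1)[OF aff])
      also have "\<dots> \<le> \<bar>e 1\<bar> * (1 + \<rho>) / 2 + \<bar>e (-1)\<bar> * (1 - \<rho>) / 2"
        using r by (intro add_mono divide_right_mono mult_right_mono) auto
      also have "\<dots> \<le> E"
      proof -
        have "\<bar>e 1\<bar> * (1 + \<rho>) \<le> \<bar>e 1\<bar> * 2" using r by (intro mult_left_mono) auto
        moreover have "\<bar>e (-1)\<bar> * (1 - \<rho>) \<le> \<bar>e (-1)\<bar> * 2" using r by (intro mult_left_mono) auto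
        ultimately show ?thesis unfolding E_def by linarith
      qed
      finally show ?thesis .
    qed
    have q: "\<xi> \<bullet> (\<sigma> *v \<xi>) \<ge> - E * (\<xi> \<bullet> \<xi>)" for \<xi>
    proof -
      have "0 * ((m + v) \<bullet> \<xi>) - 0^2 * (1 + \<rho>) / 2 + 0 * ((m - v) \<bullet> \<xi>) - 0^2 * (1 - \<rho>) / 2 \<le> e \<rho> * (\<xi> \<bullet> \<xi>) + \<xi> \<bullet> (\<sigma> *v \<xi>)"
        using Z by blast
      hence "0 \<le> e \<rho> * (\<xi> \<bullet> \<xi>) + \<xi> \<bullet> (\<sigma> *v \<xi>)" by simp
      moreover have "e \<rho> * (\<xi> \<bullet> \<xi>) \<le> E * (\<xi> \<bullet> \<xi>)" using eb by (intro mult_right_mono) auto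
      ultimately show ?thesis by simp
    qed
    have sy: "transpose \<sigma> = \<sigma>" and tr: "trace \<sigma> = 0" using Z by auto
    have eb2: "\<bar>\<sigma> $ i $ j\<bar> \<le> (N + 1) * E" for i j
      using entry_bound[OF sy tr E0 q] unfolding N_def .
    have sn: "norm \<sigma> \<le> N * (N * ((N + 1) * E))"
      unfolding N_def using norm_mat_bound[of \<sigma> "(N + 1) * E"] eb2 unfolding N_def by blast
    have a: "norm (m + v) \<le> sqrt (N * e 1) * 2" "norm (m - v) \<le> sqrt (N * e (-1)) * 2"
    proof -
      have "sqrt (N * e 1) * (1 + \<rho>) \<le> sqrt (N * e 1) * 2" using r pos1 by (intro mult_left_mono) (auto simp: N_def)
      thus "norm (m + v) \<le> sqrt (N * e 1) * 2" using Z unfolding N_def by linarith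
      have "sqrt (N * e (-1)) * (1 - \<rho>) \<le> sqrt (N * e (-1)) * 2" using r posm1 by (intro mult_left_mono) (auto simp: N_def)
      thus "norm (m - v) \<le> sqrt (N * e (-1)) * 2" using Z unfolding N_def by linarith
    qed
    have sq0: "sqrt (N * e 1) \<ge> 0" "sqrt (N * e (-1)) \<ge> 0" using pos1 posm1 by (auto simp: N_def)
    have vb: "norm v \<le> K"
    proof -
      have "(m + v) - (m - v) = 2 *\<^sub>R v" by (simp add: scaleR_2)
      hence "v = (1/2) *\<^sub>R ((m + v) - (m - v))" by simp
      hence "norm v = (1/2) * norm ((m + v) - (m - v))" by (metis norm_scaleR abs_divide abs_one abs_numeral)
      also have "\<dots> \<le> (1/2) * (norm (m + v) + norm (m - v))" by (intro mult_left_mono norm_triangle_ineq4) auto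
      also have "\<dots> \<le> (1/2) * (sqrt (N * e 1) * 2 + sqrt (N * e (-1)) * 2)" using a by (intro mult_left_mono add_mono) auto
      also have "\<dots> \<le> K" unfolding K_def using sq0 by simp
      finally show ?thesis .
    qed
    have mb: "norm m \<le> K"
    proof -
      have "(m + v) + (m - v) = 2 *\<^sub>R m" by (simp add: scaleR_2)
      hence "m = (1/2) *\<^sub>R ((m + v) + (m - v))" by simp
      hence "norm m = (1/2) * norm ((m + v) + (m - v))" by (metis norm_scaleR abs_divide abs_one abs_numeral)
      also have "\<dots> \<le> (1/2) * (norm (m + v) + norm (m - v))" by (intro mult_left_mono norm_triangle_ineq) auto
      also have "\<dots> \<le> (1/2) * (sqrt (N * e 1) * 2 + sqrt (N * e (-1)) * 2)" using a by (intro mult_left_mono add_mono) auto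
      also have "\<dots> \<le> K" unfolding K_def using sq0 by simp
      finally show ?thesis .
    qed
    have "norm w \<le> norm \<rho> + (norm v + (norm m + norm \<sigma>))"
    proof -
      have "norm (\<rho>, v, m, \<sigma>) \<le> norm \<rho> + norm (v, m, \<sigma>)" by (rule norm_Pair_le)
      also have "norm (v, m, \<sigma>) \<le> norm v + norm (m, \<sigma>)" by (rule norm_Pair_le)
      also have "norm (m, \<sigma>) \<le> norm m + norm \<sigma>" by (rule norm_Pair_le)
      finally show ?thesis unfolding w z proj_def by simp
    qed
    also have "\<dots> \<le> Bd" unfolding Bd_def using vb mb sn r by auto
    finally show ?thesis .
  qed
  thus ?thesis unfolding bounded_iff by blast
qed

lemma exists_orth:
  assumes n2: "CARD('n::finite) \<ge> 2"
  shows "\<exists>x::real^'n. x \<noteq> 0 \<and> w \<bullet> x = 0"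
proof -
  obtain i :: 'n where True by blast
  have "card (UNIV - {i}) \<ge> 1" using n2 by (simp add: card_Diff_singleton)
  then obtain j where j: "j \<in> UNIV - {i}" by (metis card.empty all_not_in_conv not_one_le_zero)
  hence ij: "i \<noteq> j" by auto
  show ?thesis
  proof (cases "w $ i = 0 \<and> w $ j = 0")
    case True
    show ?thesis
      by (rule exI[of _ "axis i 1"]) (simp add: True inner_axis axis_eq_0_iff)
  next
    case False
    define x where "x = (w $ j) *\<^sub>R axis i (1::real) - (w $ i) *\<^sub>R axis j 1"
    have xi: "x $ i = w $ j" and xj: "x $ j = - w $ i" using ij by (auto simp: x_def axis_def)
    have "x \<noteq> 0" using False xi xj by auto
    moreover have "w \<bullet> x = 0" unfolding x_def by (simp add: inner_diff_right inner_axis)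
    ultimately show ?thesis by blast
  qed
qed

lemma mat_eq_0: fixes P :: "real^'n^'m" assumes "\<And>y. P *v y = 0" shows "P = 0"
proof -
  have "P $ i $ j = 0" for i j
    using assms[of "axis j 1"] by (simp add: matrix_vector_mult_basis column_def vec_eq_iff)
  thus ?thesis by (simp add: vec_eq_iff)
qed

lemma psd_trace_pos:
  fixes P :: "real^'n::finite^'n"
  assumes sym: "transpose P = P" and psd: "\<And>\<xi>. \<xi> \<bullet> (P *v \<xi>) \<ge> 0" and nz: "P \<noteq> 0"
  shows "trace P > 0"
proof (rule ccontr)
  assume "\<not> trace P > 0"
  have d0: "P $ i $ i \<ge> 0" for i using psd[of "axis i 1"] by (simp add: axis_quad)
  have "trace P \<ge> 0" unfolding trace_def by (intro sum_nonneg) (use d0 in auto)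
  hence t0: "(\<Sum>i\<in>UNIV. P $ i $ i) = 0" using \<open>\<not> trace P > 0\<close> unfolding trace_def by simp
  have dz: "P $ i $ i = 0" for i using sum_nonneg_eq_0_iff[of UNIV "\<lambda>i. P $ i $ i"] t0 d0 by simp
  have "P $ j $ i = 0" for i j
  proof -
    have "(axis j 1 \<bullet> (P *v axis i 1))^2 \<le> (axis i 1 \<bullet> (P *v axis i 1)) * (axis j 1 \<bullet> (P *v axis j (1::real)))"
      by (rule psd_cs[OF sym psd])
    thus ?thesis by (simp add: axis_quad dz)
  qed
  hence "P = 0" by (simp add: vec_eq_iff)
  thus False using nz by simp
qed

lemma exists_u:
  fixes P :: "real^'n::finite^'n"
  assumes n2: "CARD('n) \<ge> 2" and sym: "transpose P = P" and psd: "\<And>\<xi>. \<xi> \<bullet> (P *v \<xi>) \<ge> 0" and nz: "P \<noteq> 0"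
    and x0: "x0 \<noteq> 0" "P *v x0 = \<mu> *\<^sub>R x0" and ray: "\<And>\<xi>. \<mu> * (\<xi> \<bullet> \<xi>) \<le> \<xi> \<bullet> (P *v \<xi>)"
  shows "\<exists>u. u \<bullet> x0 = 0 \<and> P *v u \<noteq> 0"
proof (cases "\<mu> > 0")
  case True
  obtain u where u: "u \<noteq> 0" "x0 \<bullet> u = 0" using exists_orth[OF n2] by blast
  have "u \<bullet> (P *v u) \<ge> \<mu> * (u \<bullet> u)" by (rule ray)
  moreover have "\<mu> * (u \<bullet> u) > 0" using True u by simp
  ultimately have "P *v u \<noteq> 0" by auto
  thus ?thesis using u by (auto simp: inner_commute)
next
  case False
  have "\<mu> * (x0 \<bullet> x0) = x0 \<bullet> (P *v x0)" using x0 by simp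
  hence "\<mu> \<ge> 0" using psd[of x0] x0(1)
    by (metis inner_gt_zero_iff zero_le_mult_iff linorder_not_le order_less_imp_le)
  hence mu0: "\<mu> = 0" using False by simp
  obtain y where y: "P *v y \<noteq> 0" using mat_eq_0 nz by blast
  define u where "u = y - ((y \<bullet> x0) / (x0 \<bullet> x0)) *\<^sub>R x0"
  have "P *v u = P *v y" unfolding u_def using x0 mu0 by (simp add: matrix_vector_mult_diff_distrib matrix_vector_mult_scaleR)
  moreover have "u \<bullet> x0 = 0" unfolding u_def using x0(1) by (simp add: inner_diff_left)
  ultimately show ?thesis using y by metis
qed

lemma Lambda_mem: "((\<rho>, v, m, \<sigma>, p) \<in> Lambda) \<longleftrightarrow> (transpose \<sigma> = \<sigma> \<and> trace \<sigma> = 0 \<and>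
   (\<exists>x t. (x, t) \<noteq> (0, 0) \<and> (\<sigma> + p *\<^sub>R mat 1) *v x + t *\<^sub>R v = 0 \<and> v \<bullet> x = 0 \<and> m \<bullet> x + \<rho> * t = 0)
   \<and> (\<rho>, v) \<noteq> (0, 0))"
  unfolding Lambda_def Zset_def by simp

lemma Lambda_scale:
  assumes "zb \<in> Lambda" "c \<noteq> 0" shows "c *\<^sub>R zb \<in> Lambda"
proof -
  obtain \<rho> v m \<sigma> p where zb: "zb = (\<rho>, v, m, \<sigma>, p)" by (cases zb) auto
  have L: "transpose \<sigma> = \<sigma> \<and> trace \<sigma> = 0 \<and>
   (\<exists>x t. (x, t) \<noteq> (0, 0) \<and> (\<sigma> + p *\<^sub>R mat 1) *v x + t *\<^sub>R v = 0 \<and> v \<bullet> x = 0 \<and> m \<bullet> x + \<rho> * t = 0)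
   \<and> (\<rho>, v) \<noteq> (0, 0)" using assms(1) unfolding zb Lambda_mem .
  then obtain x t where H: "(x, t) \<noteq> (0, 0)" "(\<sigma> + p *\<^sub>R mat 1) *v x + t *\<^sub>R v = 0" "v \<bullet> x = 0" "m \<bullet> x + \<rho> * t = 0"
    by blast
  have nz: "(\<rho>, v) \<noteq> (0, 0)" and Z: "transpose \<sigma> = \<sigma>" "trace \<sigma> = 0" using L by auto
  have "(c *\<^sub>R \<sigma> + (c * p) *\<^sub>R mat 1) *v x + t *\<^sub>R (c *\<^sub>R v) = c *\<^sub>R ((\<sigma> + p *\<^sub>R mat 1) *v x + t *\<^sub>R v)"
    by (simp add: algebra_simps scaleR_matrix_vector_assoc[symmetric])
  hence e1: "(c *\<^sub>R \<sigma> + (c * p) *\<^sub>R mat 1) *v x + t *\<^sub>R (c *\<^sub>R v) = 0" using H(2) by simp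
  have "(c *\<^sub>R m) \<bullet> x + (c * \<rho>) * t = c * (m \<bullet> x + \<rho> * t)" by (simp add: algebra_simps)
  hence e3: "(c *\<^sub>R m) \<bullet> x + (c * \<rho>) * t = 0" using H(4) by simp
  have e2: "(c *\<^sub>R v) \<bullet> x = 0" using H(3) by simp
  have nz2: "(c * \<rho>, c *\<^sub>R v) \<noteq> (0, 0)" using nz assms(2) by auto
  have Z2: "transpose (c *\<^sub>R \<sigma>) = c *\<^sub>R \<sigma>" "trace (c *\<^sub>R \<sigma>) = 0" using Z by (simp_all add: transpose_scaleR' trace_scaleR)
  have "(c * \<rho>, c *\<^sub>R v, c *\<^sub>R m, c *\<^sub>R \<sigma>, c * p) \<in> Lambda"
    unfolding Lambda_mem using Z2 nz2 H(1) e1 e2 e3 by blast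
  thus ?thesis unfolding zb by simp
qed

lemma scalar_D1:
  fixes al ab q s \<delta> \<kappa> :: real
  assumes q: "q \<ge> 0" and s: "s > 0" and d: "\<delta> * \<delta> = 1" and k: "\<bar>\<kappa>\<bar> \<le> 1/2" and ab: "ab^2 \<le> s * q"
  shows "(al + \<delta> * ab)^2 / (2 * s) \<le> q + al^2 / (2 * s) + \<delta> * (al * ab / s + \<kappa> * q)"
proof -
  have dd: "\<delta> = 1 \<or> \<delta> = -1" using d by (simp add: square_eq_1_iff)
  have e: "(al + \<delta> * ab)^2 / (2 * s) = al^2 / (2 * s) + \<delta> * (al * ab / s) + ab^2 / (2 * s)"
  proof -
    have "(al + \<delta> * ab)^2 = al^2 + 2 * (\<delta> * (al * ab)) + ab^2"
      using dd by (auto simp: power2_eq_square algebra_simps)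
    hence "(al + \<delta> * ab)^2 / (2 * s) = al^2 / (2 * s) + 2 * (\<delta> * (al * ab)) / (2 * s) + ab^2 / (2 * s)"
      by (simp add: add_divide_distrib)
    also have "2 * (\<delta> * (al * ab)) / (2 * s) = \<delta> * (al * ab / s)" by simp
    finally show ?thesis .
  qed
  have h1: "ab^2 / (2 * s) \<le> q / 2" using ab s by (simp add: divide_le_eq algebra_simps)
  have "\<bar>\<delta>\<bar> = 1" using dd by auto
  hence "\<bar>\<delta> * \<kappa>\<bar> \<le> 1/2" using k by (simp add: abs_mult)
  hence "\<delta> * \<kappa> \<ge> -1/2" by linarith
  hence h2: "\<delta> * \<kappa> * q \<ge> -1/2 * q" using q by (intro mult_right_mono) auto
  have "\<delta> * (al * ab / s + \<kappa> * q) = \<delta> * (al * ab / s) + \<delta> * \<kappa> * q" by (simp add: algebra_simps)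
  thus ?thesis unfolding e using h1 h2 by linarith
qed

lemma D1core:
  fixes e :: "real \<Rightarrow> real" and \<sigma> :: "real^'n::finite^'n"
  assumes zS: "(\<rho>, v, m, \<sigma>, p) \<in> (Sset e :: 'n state set)" and s: "1 + \<rho> > 0"
    and trP: "trace (Pmat e (\<rho>, v, m, \<sigma>, p)) > 0"
    and x0: "x0 \<noteq> 0" "Pmat e (\<rho>, v, m, \<sigma>, p) *v x0 = \<mu> *\<^sub>R x0"
    and u: "u \<bullet> x0 = 0" "Pmat e (\<rho>, v, m, \<sigma>, p) *v u \<noteq> 0"
    and b1: "norm (m + v) + norm (Pmat e (\<rho>, v, m, \<sigma>, p) *v u) \<le> sqrt (real CARD('n) * e 1) * (1 + \<rho>)"
    and b2: "\<bar>((m + v) \<bullet> (Pmat e (\<rho>, v, m, \<sigma>, p) *v u) / (1 + \<rho>)) / trace (Pmat e (\<rho>, v, m, \<sigma>, p))\<bar> \<le> 1/2"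
    and b3: "u \<bullet> (Pmat e (\<rho>, v, m, \<sigma>, p) *v u) \<le> 1 + \<rho>"
  shows "\<exists>zb \<in> Lambda - {0}. (\<rho>, v, m, \<sigma>, p) + zb \<in> Sset e \<and> (\<rho>, v, m, \<sigma>, p) - zb \<in> Sset e"
proof -
  define P where "P = Pmat e (\<rho>, v, m, \<sigma>, p)"
  define a where "a = m + v"
  define S where "S = 1 + \<rho>"
  define ab where "ab = P *v u"
  define \<kappa> where "\<kappa> = - ((a \<bullet> ab / S) / trace P)"
  define \<sigma>b where "\<sigma>b = (1 / (2 * S)) *\<^sub>R (outer a ab + outer ab a) + \<kappa> *\<^sub>R P"
  define pb where "pb = - \<kappa> * \<mu>"
  define zb where "zb = (0::real, (1/2) *\<^sub>R ab, (1/2) *\<^sub>R ab, \<sigma>b, pb)"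
  note Z = zS[unfolded Sset_iff]
  have Sp: "S > 0" using s S_def by simp
  have symP: "transpose P = P" unfolding P_def using Z sym_P by blast
  have psdP: "\<xi> \<bullet> (P *v \<xi>) \<ge> 0" for \<xi> unfolding P_def by (rule psd_P[OF zS])
  have trP': "trace P > 0" using trP P_def by simp
  have abnz: "ab \<noteq> 0" using u(2) unfolding ab_def P_def .
  have abx0: "ab \<bullet> x0 = 0"
  proof -
    have "ab \<bullet> x0 = x0 \<bullet> (P *v u)" unfolding ab_def by (simp add: inner_commute)
    also have "\<dots> = u \<bullet> (P *v x0)" by (rule sym_inner[OF symP])
    also have "\<dots> = \<mu> * (u \<bullet> x0)" using x0(2) unfolding P_def by simp
    finally show ?thesis using u(1) by simp
  qed
  have sym\<sigma>b: "transpose \<sigma>b = \<sigma>b" unfolding \<sigma>b_def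
    by (simp add: transpose_add' transpose_scaleR' transpose_outer symP add.commute)
  have tr\<sigma>b: "trace \<sigma>b = 0"
  proof -
    have "trace \<sigma>b = (1 / (2 * S)) * (a \<bullet> ab + ab \<bullet> a) + \<kappa> * trace P"
      unfolding \<sigma>b_def by (simp add: trace_add trace_scaleR trace_outer)
    also have "\<dots> = a \<bullet> ab / S + \<kappa> * trace P" using Sp by (simp add: inner_commute field_simps)
    also have "\<dots> = 0" unfolding \<kappa>_def using trP' by simp
    finally show ?thesis .
  qed
  have \<sigma>bx0: "\<sigma>b *v x0 = ((a \<bullet> x0) / (2 * S)) *\<^sub>R ab + (\<kappa> * \<mu>) *\<^sub>R x0"
    unfolding \<sigma>b_def using x0(2) abx0 unfolding P_def[symmetric]
    by (simp add: matrix_vector_mult_add_rdistrib scaleR_matrix_vector_assoc[symmetric] outer_mv inner_commute scaleR_add_right)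
  have zbL: "zb \<in> Lambda"
  proof -
    define t where "t = - (a \<bullet> x0) / S"
    have "(\<sigma>b + pb *\<^sub>R mat 1) *v x0 = \<sigma>b *v x0 + pb *\<^sub>R x0"
      by (simp add: matrix_vector_mult_add_rdistrib scaleR_matrix_vector_assoc[symmetric])
    also have "\<dots> = ((a \<bullet> x0) / (2 * S)) *\<^sub>R ab" unfolding \<sigma>bx0 pb_def by simp
    finally have "(\<sigma>b + pb *\<^sub>R mat 1) *v x0 + t *\<^sub>R ((1/2) *\<^sub>R ab) = ((a \<bullet> x0) / (2 * S) + t / 2) *\<^sub>R ab"
      by (simp add: scaleR_add_left)
    also have "(a \<bullet> x0) / (2 * S) + t / 2 = 0" unfolding t_def using Sp by (simp add: field_simps)
    finally have e1: "(\<sigma>b + pb *\<^sub>R mat 1) *v x0 + t *\<^sub>R ((1/2) *\<^sub>R ab) = 0" by simp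
    have e2: "((1/2) *\<^sub>R ab) \<bullet> x0 = 0" using abx0 by simp
    have e3: "((1/2) *\<^sub>R ab) \<bullet> x0 + 0 * t = 0" using abx0 by simp
    have nz: "(0::real, (1/2) *\<^sub>R ab) \<noteq> (0, 0)" using abnz by simp
    have "(x0, t) \<noteq> (0, 0)" using x0(1) by simp
    thus ?thesis unfolding zb_def Lambda_mem using sym\<sigma>b tr\<sigma>b e1 e2 e3 nz by blast
  qed
  have zb0: "zb \<noteq> 0" using abnz unfolding zb_def by (simp add: zero_prod_def)
  have mem: "(\<rho>, v + \<delta> *\<^sub>R ((1/2) *\<^sub>R ab), m + \<delta> *\<^sub>R ((1/2) *\<^sub>R ab), \<sigma> + \<delta> *\<^sub>R \<sigma>b, p + \<delta> * pb) \<in> Sset e"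
    if dd: "\<delta> * \<delta> = 1" for \<delta>
  proof -
    have ad: "\<bar>\<delta>\<bar> = 1" using dd by (auto simp: square_eq_1_iff)
    have hh: "\<delta> *\<^sub>R ((1/2) *\<^sub>R ab) + \<delta> *\<^sub>R ((1/2) *\<^sub>R ab) = \<delta> *\<^sub>R ab"
      by (simp add: scaleR_add_right[symmetric] scaleR_2[symmetric])
    have sum1: "(m + \<delta> *\<^sub>R ((1/2) *\<^sub>R ab)) + (v + \<delta> *\<^sub>R ((1/2) *\<^sub>R ab)) = a + \<delta> *\<^sub>R ab"
      unfolding a_def hh[symmetric] by (simp add: algebra_simps)
    have dif1: "(m + \<delta> *\<^sub>R ((1/2) *\<^sub>R ab)) - (v + \<delta> *\<^sub>R ((1/2) *\<^sub>R ab)) = m - v" by simp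
    have C1: "norm (a + \<delta> *\<^sub>R ab) \<le> sqrt (real CARD('n) * e 1) * (1 + \<rho>)"
    proof -
      have "norm (a + \<delta> *\<^sub>R ab) \<le> norm a + norm (\<delta> *\<^sub>R ab)" by (rule norm_triangle_ineq)
      also have "norm (\<delta> *\<^sub>R ab) = norm ab" using ad by simp
      finally show ?thesis using b1 unfolding a_def ab_def P_def by linarith
    qed
    have Q: "hq (1 + \<rho>) ((a + \<delta> *\<^sub>R ab) \<bullet> \<xi>) + hq (1 - \<rho>) ((m - v) \<bullet> \<xi>)
        \<le> e \<rho> * (\<xi> \<bullet> \<xi>) + \<xi> \<bullet> ((\<sigma> + \<delta> *\<^sub>R \<sigma>b) *v \<xi>)" for \<xi>
    proof -
      define q where "q = \<xi> \<bullet> (P *v \<xi>)"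
      define al where "al = a \<bullet> \<xi>"
      define abx where "abx = ab \<bullet> \<xi>"
      have q0: "q \<ge> 0" unfolding q_def by (rule psdP)
      have qe: "q = e \<rho> * (\<xi> \<bullet> \<xi>) + \<xi> \<bullet> (\<sigma> *v \<xi>) - hq (1 + \<rho>) al - hq (1 - \<rho>) ((m - v) \<bullet> \<xi>)"
        unfolding q_def P_def al_def a_def by (rule quadP)
      have sbq: "\<xi> \<bullet> (\<sigma>b *v \<xi>) = al * abx / S + \<kappa> * q"
      proof -
        have "\<xi> \<bullet> (\<sigma>b *v \<xi>) = (1 / (2 * S)) * (\<xi> \<bullet> (outer a ab *v \<xi>) + \<xi> \<bullet> (outer ab a *v \<xi>)) + \<kappa> * q"
          unfolding \<sigma>b_def q_def
          by (simp add: matrix_vector_mult_add_rdistrib scaleR_matrix_vector_assoc[symmetric] inner_add_right)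
        also have "\<dots> = al * abx / S + \<kappa> * q"
          unfolding al_def abx_def using Sp by (simp add: outer_mv inner_commute field_simps)
        finally show ?thesis .
      qed
      have abq: "abx^2 \<le> S * q"
      proof -
        have "abx^2 = (\<xi> \<bullet> (P *v u))^2" unfolding abx_def ab_def by (simp add: inner_commute)
        also have "\<dots> \<le> (u \<bullet> (P *v u)) * (\<xi> \<bullet> (P *v \<xi>))" by (rule psd_cs[OF symP psdP])
        also have "\<dots> \<le> S * q" unfolding q_def S_def using b3 q0[unfolded q_def] unfolding P_def
          by (intro mult_right_mono) auto
        finally show ?thesis .
      qed
      have k: "\<bar>\<kappa>\<bar> \<le> 1/2" using b2 unfolding \<kappa>_def a_def ab_def P_def S_def by simp
      have hqa: "hq (1 + \<rho>) ((a + \<delta> *\<^sub>R ab) \<bullet> \<xi>) = (al + \<delta> * abx)^2 / (2 * S)"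
        using Sp unfolding hq_def al_def abx_def S_def by (simp add: inner_add_left)
      have hqa0: "hq (1 + \<rho>) al = al^2 / (2 * S)" using Sp unfolding hq_def S_def by simp
      have "(al + \<delta> * abx)^2 / (2 * S) \<le> q + al^2 / (2 * S) + \<delta> * (al * abx / S + \<kappa> * q)"
        by (rule scalar_D1[OF q0 Sp dd k abq])
      moreover have "\<xi> \<bullet> ((\<sigma> + \<delta> *\<^sub>R \<sigma>b) *v \<xi>) = \<xi> \<bullet> (\<sigma> *v \<xi>) + \<delta> * (al * abx / S + \<kappa> * q)"
        unfolding sbq[symmetric] by (simp add: matrix_vector_mult_add_rdistrib scaleR_matrix_vector_assoc[symmetric] inner_add_right)
      ultimately show ?thesis unfolding hqa using qe hqa0 by linarith
    qed
    show ?thesis unfolding Sset_iff sum1 dif1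
      using Z C1 Q sym\<sigma>b tr\<sigma>b
      by (simp add: transpose_add' transpose_scaleR' trace_add trace_scaleR)
  qed
  have p1: "(\<rho>, v, m, \<sigma>, p) + zb \<in> Sset e" using mem[of 1] unfolding zb_def by simp
  have m1: "(\<rho>, v, m, \<sigma>, p) - zb \<in> Sset e" using mem[of "-1"] unfolding zb_def by (simp add: algebra_simps)
  show ?thesis using zbL zb0 p1 m1 by blast
qed

lemma D1:
  fixes e :: "real \<Rightarrow> real" and \<sigma> :: "real^'n::finite^'n"
  assumes n2: "CARD('n) \<ge> 2"
    and zS: "(\<rho>, v, m, \<sigma>, p) \<in> (Sset e :: 'n state set)" and s: "1 + \<rho> > 0"
    and C1s: "norm (m + v) < sqrt (real CARD('n) * e 1) * (1 + \<rho>)"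
    and nz: "Pmat e (\<rho>, v, m, \<sigma>, p) \<noteq> 0"
  shows "\<exists>zb \<in> Lambda - {0}. (\<rho>, v, m, \<sigma>, p) + zb \<in> Sset e \<and> (\<rho>, v, m, \<sigma>, p) - zb \<in> Sset e"
proof -
  define P where "P = Pmat e (\<rho>, v, m, \<sigma>, p)"
  note Z = zS[unfolded Sset_iff]
  have symP: "transpose P = P" unfolding P_def using Z sym_P by blast
  have psdP: "\<xi> \<bullet> (P *v \<xi>) \<ge> 0" for \<xi> unfolding P_def by (rule psd_P[OF zS])
  have nzP: "P \<noteq> 0" using nz P_def by simp
  have trP: "trace P > 0" by (rule psd_trace_pos[OF symP psdP nzP])
  obtain x0 \<mu> where x0: "x0 \<noteq> 0" "P *v x0 = \<mu> *\<^sub>R x0" and ray: "\<forall>\<xi>. \<mu> * (\<xi> \<bullet> \<xi>) \<le> \<xi> \<bullet> (P *v \<xi>)"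
    using min_eig[OF symP] by blast
  obtain u0 where u0: "u0 \<bullet> x0 = 0" "P *v u0 \<noteq> 0"
    using exists_u[OF n2 symP psdP nzP x0] ray by blast
  define d where "d = sqrt (real CARD('n) * e 1) * (1 + \<rho>) - norm (m + v)"
  define nP where "nP = norm (P *v u0)"
  define k0 where "k0 = ((m + v) \<bullet> (P *v u0) / (1 + \<rho>)) / trace P"
  define q0 where "q0 = u0 \<bullet> (P *v u0)"
  define \<epsilon> where "\<epsilon> = min (min 1 (d / nP)) (min (1 / (2 * \<bar>k0\<bar> + 1)) ((1 + \<rho>) / (q0 + 1)))"
  have dp: "d > 0" using C1s d_def by simp
  have nPp: "nP > 0" using u0(2) nP_def by simp
  have q00: "q0 \<ge> 0" unfolding q0_def by (rule psdP)
  have ep: "\<epsilon> > 0" unfolding \<epsilon>_def using dp nPp q00 s by auto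
  have e1: "\<epsilon> \<le> 1" "\<epsilon> \<le> d / nP" "\<epsilon> \<le> 1 / (2 * \<bar>k0\<bar> + 1)" "\<epsilon> \<le> (1 + \<rho>) / (q0 + 1)"
    unfolding \<epsilon>_def by auto
  define u where "u = \<epsilon> *\<^sub>R u0"
  have Pu: "P *v u = \<epsilon> *\<^sub>R (P *v u0)" unfolding u_def by (simp add: matrix_vector_mult_scaleR)
  have u1: "u \<bullet> x0 = 0" unfolding u_def using u0 by simp
  have u2: "P *v u \<noteq> 0" unfolding Pu using ep u0 by simp
  have b1: "norm (m + v) + norm (P *v u) \<le> sqrt (real CARD('n) * e 1) * (1 + \<rho>)"
  proof -
    have "norm (P *v u) = \<epsilon> * nP" unfolding Pu nP_def using ep by simp
    also have "\<dots> \<le> (d / nP) * nP" using e1 nPp by (intro mult_right_mono) auto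
    also have "\<dots> = d" using nPp by simp
    finally show ?thesis unfolding d_def by simp
  qed
  have b2: "\<bar>((m + v) \<bullet> (P *v u) / (1 + \<rho>)) / trace P\<bar> \<le> 1/2"
  proof -
    have "((m + v) \<bullet> (P *v u) / (1 + \<rho>)) / trace P = \<epsilon> * k0" unfolding Pu k0_def by simp
    hence "\<bar>((m + v) \<bullet> (P *v u) / (1 + \<rho>)) / trace P\<bar> = \<epsilon> * \<bar>k0\<bar>" using ep by (simp add: abs_mult)
    also have "\<dots> \<le> (1 / (2 * \<bar>k0\<bar> + 1)) * \<bar>k0\<bar>" using e1 by (intro mult_right_mono) auto
    also have "\<dots> \<le> 1/2" by (simp add: field_simps)
    finally show ?thesis .
  qed
  have b3: "u \<bullet> (P *v u) \<le> 1 + \<rho>"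
  proof -
    have "u \<bullet> (P *v u) = \<epsilon> * (\<epsilon> * q0)" unfolding u_def q0_def by (simp add: matrix_vector_mult_scaleR)
    also have "\<dots> \<le> 1 * (\<epsilon> * q0)" using e1 ep q00 by (intro mult_right_mono) auto
    also have "\<dots> \<le> ((1 + \<rho>) / (q0 + 1)) * q0" using e1(4) q00 by (simp add: mult_right_mono del: times_divide_eq_left)
    also have "\<dots> \<le> 1 + \<rho>" using q00 s by (simp add: field_simps)
    finally show ?thesis .
  qed
  show ?thesis
    by (rule D1core[OF zS s trP[unfolded P_def] x0[unfolded P_def] u1[unfolded P_def] u2[unfolded P_def]
        b1[unfolded P_def] b2[unfolded P_def] b3[unfolded P_def]])
qed

lemma hq_aux: fixes c s al :: real assumes "c > 0" "s > 0"
  shows "(c * al)^2 / (2 * (s * c)) = c * (al^2 / (2 * s))"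
  using assms by (simp add: field_simps power2_eq_square)

lemma hq_scale2:
  fixes s \<delta> al :: real assumes "s > 0" "s + \<delta> > 0"
  shows "hq (s + \<delta>) ((1 + \<delta> / s) * al) = (1 + \<delta> / s) * (al^2 / (2 * s))"
proof -
  have e: "s + \<delta> = s * (1 + \<delta> / s)" using assms by (simp add: field_simps)
  have c: "1 + \<delta> / s > 0" using assms by (simp add: field_simps)
  show ?thesis using assms(2) unfolding hq_def e using hq_aux[OF c assms(1)] by simp
qed

lemma hv1: "(1/2) *\<^sub>R (x - y) + (1/2) *\<^sub>R (x + y) = (x::'a::real_vector)"
proof -
  have "(1/2) *\<^sub>R (x - y) + (1/2) *\<^sub>R (x + y) = (1/2) *\<^sub>R ((x - y) + (x + y))" by (rule scaleR_add_right[symmetric])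
  also have "(x - y) + (x + y) = 2 *\<^sub>R x" unfolding scaleR_2 by (simp add: algebra_simps)
  finally show ?thesis by simp
qed
lemma hv2: "(1/2) *\<^sub>R (x - y) - (1/2) *\<^sub>R (x + y) = - (y::'a::real_vector)"
proof -
  have "(1/2) *\<^sub>R (x - y) - (1/2) *\<^sub>R (x + y) = (1/2) *\<^sub>R ((x - y) - (x + y))" by (rule scaleR_diff_right[symmetric])
  also have "(x - y) - (x + y) = (-2) *\<^sub>R y" by (simp add: algebra_simps scaleR_2)
  finally show ?thesis by simp
qed
lemma hv3: "(m + d *\<^sub>R p) + (v + d *\<^sub>R q) = (m + v) + d *\<^sub>R (p + (q::'a::real_vector))"
  by (simp add: algebra_simps)
lemma hv4: "(m + d *\<^sub>R p) - (v + d *\<^sub>R q) = (m - v) + d *\<^sub>R (p - (q::'a::real_vector))"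
  by (simp add: algebra_simps)
lemma hv5: "x + d *\<^sub>R ((1 / s) *\<^sub>R x) = (1 + d / s) *\<^sub>R (x::'a::real_vector)"
  by (simp add: algebra_simps)
lemma hv6: "x + d *\<^sub>R (- ((1 / s) *\<^sub>R x)) = (1 - d / s) *\<^sub>R (x::'a::real_vector)"
  by (simp add: algebra_simps)

lemma caseA:
  fixes e :: "real \<Rightarrow> real" and \<sigma> :: "real^'n::finite^'n"
  assumes n2: "CARD('n) \<ge> 2" and aff: "\<exists>A B. \<forall>r. e r = A * r + B" and pos1: "e 1 > 0" and posm1: "e (-1) > 0"
    and zS: "(\<rho>, v, m, \<sigma>, p) \<in> (Sset e :: 'n state set)" and r1: "-1 < \<rho>" and r2: "\<rho> < 1"
    and P0: "Pmat e (\<rho>, v, m, \<sigma>, p) = 0"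
  shows "\<exists>zb \<in> Lambda - {0}. (\<rho>, v, m, \<sigma>, p) + zb \<in> Sset e \<and> (\<rho>, v, m, \<sigma>, p) - zb \<in> Sset e"
proof -
  define s where "s = 1 + \<rho>"
  define r where "r = 1 - \<rho>"
  define a where "a = m + v"
  define b where "b = m - v"
  define N where "N = real CARD('n)"
  define E where "E = (e 1 - e (-1)) / 2"
  have sp: "s > 0" and rp: "r > 0" using r1 r2 s_def r_def by auto
  have Np: "N > 0" using N_def by simp
  note Z = zS[unfolded Sset_iff]
  have sym: "transpose \<sigma> = \<sigma>" and tr: "trace \<sigma> = 0" using Z by auto
  have q0: "e \<rho> * (\<xi> \<bullet> \<xi>) + \<xi> \<bullet> (\<sigma> *v \<xi>) = hq s (a \<bullet> \<xi>) + hq r (b \<bullet> \<xi>)" for \<xi>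
    using quadP[of \<xi> e \<rho> v m \<sigma> p] unfolding P0 s_def r_def a_def b_def by simp
  have eaff: "e \<rho> = e 1 * s / 2 + e (-1) * r / 2" using e_affine_conv(1)[OF aff, of \<rho>] s_def r_def by simp
  have trace0: "N * e \<rho> = norm a ^ 2 / (2 * s) + norm b ^ 2 / (2 * r)"
    using trace_P[OF tr, of e \<rho> v m p] unfolding P0 using sp rp
    by (simp add: s_def r_def a_def b_def N_def hq_def trace_0[unfolded mat_0] )
  have ca: "norm a ^ 2 \<le> N * e 1 * s^2"
  proof -
    have "norm a \<le> sqrt (N * e 1) * s" using Z unfolding a_def N_def s_def by simp
    hence "norm a ^ 2 \<le> (sqrt (N * e 1) * s)^2" by (intro power_mono) auto
    thus ?thesis using Np pos1 sp by (simp add: power_mult_distrib)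
  qed
  have cb: "norm b ^ 2 \<le> N * e (-1) * r^2"
  proof -
    have "norm b \<le> sqrt (N * e (-1)) * r" using Z unfolding b_def N_def r_def by simp
    hence "norm b ^ 2 \<le> (sqrt (N * e (-1)) * r)^2" by (intro power_mono) auto
    thus ?thesis using Np posm1 rp by (simp add: power_mult_distrib)
  qed
  have ta: "norm a ^ 2 / (2 * s) \<le> N * e 1 * s / 2" using ca sp by (simp add: divide_le_eq power2_eq_square algebra_simps)
  have tb: "norm b ^ 2 / (2 * r) \<le> N * e (-1) * r / 2" using cb rp by (simp add: divide_le_eq power2_eq_square algebra_simps)
  have sumeq: "N * e \<rho> = N * e 1 * s / 2 + N * e (-1) * r / 2" unfolding eaff by (simp add: algebra_simps)
  have ta': "norm a ^ 2 / (2 * s) = N * e 1 * s / 2" using ta tb trace0 sumeq by linarith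
  have tb': "norm b ^ 2 / (2 * r) = N * e (-1) * r / 2" using ta tb trace0 sumeq by linarith
  have na: "norm a ^ 2 = N * e 1 * s^2" using ta' sp by (simp add: field_simps power2_eq_square)
  have nb: "norm b ^ 2 = N * e (-1) * r^2" using tb' rp by (simp add: field_simps power2_eq_square)
  define \<sigma>b where "\<sigma>b = (1 / (2 * s^2)) *\<^sub>R outer a a - (1 / (2 * r^2)) *\<^sub>R outer b b - E *\<^sub>R mat 1"
  define w where "w = (1 / s) *\<^sub>R a + (1 / r) *\<^sub>R b"
  define vb where "vb = (1/2) *\<^sub>R w"
  define mb where "mb = (1/2) *\<^sub>R ((1 / s) *\<^sub>R a - (1 / r) *\<^sub>R b)"
  define zb0 where "zb0 = (1::real, vb, mb, \<sigma>b, E)"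
  have sym\<sigma>b: "transpose \<sigma>b = \<sigma>b" unfolding \<sigma>b_def
    by (simp add: transpose_diff' transpose_scaleR' transpose_outer transpose_mat')
  have tr\<sigma>b: "trace \<sigma>b = 0"
  proof -
    have "trace \<sigma>b = norm a ^ 2 / (2 * s^2) - norm b ^ 2 / (2 * r^2) - E * N"
      unfolding \<sigma>b_def by (simp add: trace_sub trace_scaleR trace_outer trace_I N_def dot_square_norm)
    also have "\<dots> = N * e 1 / 2 - N * e (-1) / 2 - E * N" unfolding na nb using sp rp by (simp add: field_simps power2_eq_square)
    also have "\<dots> = 0" unfolding E_def by (simp add: field_simps)
    finally show ?thesis .
  qed
  have zb0L: "zb0 \<in> Lambda"
  proof -
    obtain x where x: "x \<noteq> 0" "w \<bullet> x = 0" using exists_orth[OF n2] by blast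
    define A where "A = a \<bullet> x"
    define B where "B = b \<bullet> x"
    have AB: "A / s + B / r = 0" using x(2) unfolding w_def A_def B_def by (simp add: inner_add_left)
    define t where "t = - (mb \<bullet> x)"
    have t': "t = - (A / s - B / r) / 2" unfolding t_def mb_def A_def B_def by (simp add: inner_diff_left field_simps)
    have "(\<sigma>b + E *\<^sub>R mat 1) *v x = (A / (2 * s^2)) *\<^sub>R a - (B / (2 * r^2)) *\<^sub>R b"
      unfolding \<sigma>b_def A_def B_def
      by (simp add: matrix_vector_mult_add_rdistrib matrix_vector_mult_diff_rdistrib scaleR_matrix_vector_assoc[symmetric] outer_mv inner_commute)
    moreover have "t *\<^sub>R vb = (t / (2 * s)) *\<^sub>R a + (t / (2 * r)) *\<^sub>R b"
      unfolding vb_def w_def by (simp add: scaleR_add_right)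
    ultimately have "(\<sigma>b + E *\<^sub>R mat 1) *v x + t *\<^sub>R vb = (A / (2 * s^2) + t / (2 * s)) *\<^sub>R a + (t / (2 * r) - B / (2 * r^2)) *\<^sub>R b"
      by (simp add: algebra_simps)
    also have "A / (2 * s^2) + t / (2 * s) = 0"
    proof -
      have "A / (2 * s^2) + t / (2 * s) = (A / s + B / r) / (4 * s)" unfolding t' using sp rp by (simp add: field_simps power2_eq_square)
      thus ?thesis using AB by simp
    qed
    also have "t / (2 * r) - B / (2 * r^2) = 0"
    proof -
      have "t / (2 * r) - B / (2 * r^2) = - (A / s + B / r) / (4 * r)" unfolding t' using sp rp by (simp add: field_simps power2_eq_square)
      thus ?thesis using AB by simp
    qed
    finally have e1: "(\<sigma>b + E *\<^sub>R mat 1) *v x + t *\<^sub>R vb = 0" by simp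
    have e2: "vb \<bullet> x = 0" unfolding vb_def using x(2) by simp
    have e3: "mb \<bullet> x + 1 * t = 0" unfolding t_def by simp
    have nz: "(1::real, vb) \<noteq> (0, 0)" by simp
    have "(x, t) \<noteq> (0, 0)" using x(1) by simp
    thus ?thesis unfolding zb0_def Lambda_mem using sym\<sigma>b tr\<sigma>b e1 e2 e3 nz by blast
  qed
  define \<epsilon> where "\<epsilon> = min s r / 2"
  have ep: "\<epsilon> > 0" "\<epsilon> < s" "\<epsilon> < r" unfolding \<epsilon>_def using sp rp by auto
  have mem: "(\<rho>, v, m, \<sigma>, p) + \<delta> *\<^sub>R zb0 \<in> Sset e" if dl: "\<bar>\<delta>\<bar> \<le> \<epsilon>" for \<delta>
  proof -
    have sd: "s + \<delta> > 0" and rd: "r - \<delta> > 0" using dl ep by auto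
    have pt: "(\<rho>, v, m, \<sigma>, p) + \<delta> *\<^sub>R zb0 = (\<rho> + \<delta>, v + \<delta> *\<^sub>R vb, m + \<delta> *\<^sub>R mb, \<sigma> + \<delta> *\<^sub>R \<sigma>b, p + \<delta> * E)"
      unfolding zb0_def by simp
    have a': "(m + \<delta> *\<^sub>R mb) + (v + \<delta> *\<^sub>R vb) = (1 + \<delta> / s) *\<^sub>R a"
    proof -
      have "mb + vb = (1 / s) *\<^sub>R a" unfolding mb_def vb_def w_def by (rule hv1)
      hence "(m + \<delta> *\<^sub>R mb) + (v + \<delta> *\<^sub>R vb) = a + \<delta> *\<^sub>R ((1 / s) *\<^sub>R a)"
        unfolding a_def hv3 by simp
      thus ?thesis unfolding hv5 by simp
    qed
    have b': "(m + \<delta> *\<^sub>R mb) - (v + \<delta> *\<^sub>R vb) = (1 - \<delta> / r) *\<^sub>R b"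
    proof -
      have "mb - vb = - ((1 / r) *\<^sub>R b)" unfolding mb_def vb_def w_def by (rule hv2)
      hence "(m + \<delta> *\<^sub>R mb) - (v + \<delta> *\<^sub>R vb) = b + \<delta> *\<^sub>R (- ((1 / r) *\<^sub>R b))"
        unfolding b_def hv4 by simp
      thus ?thesis unfolding hv6 by simp
    qed
    have s': "1 + (\<rho> + \<delta>) = s + \<delta>" and r': "1 - (\<rho> + \<delta>) = r - \<delta>" unfolding s_def r_def by simp_all
    have f1: "1 + \<delta> / s > 0" using sd sp by (simp add: field_simps)
    have f2: "1 - \<delta> / r > 0" using rd rp by (simp add: field_simps)
    have C1: "norm ((1 + \<delta> / s) *\<^sub>R a) \<le> sqrt (real CARD('n) * e 1) * (s + \<delta>)"
    proof -
      have "norm ((1 + \<delta> / s) *\<^sub>R a) = (1 + \<delta> / s) * norm a" using f1 by simp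
      also have "\<dots> \<le> (1 + \<delta> / s) * (sqrt (real CARD('n) * e 1) * s)"
        using Z f1 unfolding a_def s_def by (intro mult_left_mono) auto
      also have "\<dots> = sqrt (real CARD('n) * e 1) * (s + \<delta>)" using sp by (simp add: field_simps)
      finally show ?thesis .
    qed
    have C2: "norm ((1 - \<delta> / r) *\<^sub>R b) \<le> sqrt (real CARD('n) * e (-1)) * (r - \<delta>)"
    proof -
      have "norm ((1 - \<delta> / r) *\<^sub>R b) = (1 - \<delta> / r) * norm b" using f2 by simp
      also have "\<dots> \<le> (1 - \<delta> / r) * (sqrt (real CARD('n) * e (-1)) * r)"
        using Z f2 unfolding b_def r_def by (intro mult_left_mono) auto
      also have "\<dots> = sqrt (real CARD('n) * e (-1)) * (r - \<delta>)" using rp by (simp add: field_simps)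
      finally show ?thesis .
    qed
    have Q: "hq (s + \<delta>) (((1 + \<delta> / s) *\<^sub>R a) \<bullet> \<xi>) + hq (r - \<delta>) (((1 - \<delta> / r) *\<^sub>R b) \<bullet> \<xi>)
        \<le> e (\<rho> + \<delta>) * (\<xi> \<bullet> \<xi>) + \<xi> \<bullet> ((\<sigma> + \<delta> *\<^sub>R \<sigma>b) *v \<xi>)" for \<xi>
    proof -
      define al where "al = a \<bullet> \<xi>"
      define be where "be = b \<bullet> \<xi>"
      have h1: "hq (s + \<delta>) (((1 + \<delta> / s) *\<^sub>R a) \<bullet> \<xi>) = (1 + \<delta> / s) * (al^2 / (2 * s))"
        unfolding al_def using hq_scale2[OF sp sd] by simp
      have h2: "hq (r - \<delta>) (((1 - \<delta> / r) *\<^sub>R b) \<bullet> \<xi>) = (1 - \<delta> / r) * (be^2 / (2 * r))"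
        unfolding be_def using hq_scale2[OF rp, of "-\<delta>"] rd by simp
      have h3: "\<xi> \<bullet> (\<sigma>b *v \<xi>) = al^2 / (2 * s^2) - be^2 / (2 * r^2) - E * (\<xi> \<bullet> \<xi>)"
        unfolding \<sigma>b_def al_def be_def
        by (simp add: matrix_vector_mult_diff_rdistrib scaleR_matrix_vector_assoc[symmetric] inner_diff_right inner_outer)
      have h4: "e \<rho> * (\<xi> \<bullet> \<xi>) + \<xi> \<bullet> (\<sigma> *v \<xi>) = al^2 / (2 * s) + be^2 / (2 * r)"
        using q0[of \<xi>] sp rp unfolding hq_def al_def be_def by simp
      have h5: "e (\<rho> + \<delta>) = e \<rho> + \<delta> * E" using aff unfolding E_def by (auto simp: field_simps)
      have "\<xi> \<bullet> ((\<sigma> + \<delta> *\<^sub>R \<sigma>b) *v \<xi>) = \<xi> \<bullet> (\<sigma> *v \<xi>) + \<delta> * (\<xi> \<bullet> (\<sigma>b *v \<xi>))"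
        by (simp add: matrix_vector_mult_add_rdistrib scaleR_matrix_vector_assoc[symmetric] inner_add_right)
      hence "e (\<rho> + \<delta>) * (\<xi> \<bullet> \<xi>) + \<xi> \<bullet> ((\<sigma> + \<delta> *\<^sub>R \<sigma>b) *v \<xi>)
          = al^2 / (2 * s) + be^2 / (2 * r) + \<delta> * (al^2 / (2 * s^2) - be^2 / (2 * r^2))"
        using h3 h4 h5 by (simp add: algebra_simps)
      also have "\<dots> = (1 + \<delta> / s) * (al^2 / (2 * s)) + (1 - \<delta> / r) * (be^2 / (2 * r))"
        using sp rp by (simp add: field_simps power2_eq_square)
      finally show ?thesis unfolding h1 h2 by simp
    qed
    show ?thesis unfolding pt Sset_iff a' b' s' r'
      using Z C1 C2 Q sym\<sigma>b tr\<sigma>b dl ep r1 r2 unfolding s_def r_def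
      by (auto simp: transpose_add' transpose_scaleR' trace_add trace_scaleR)
  qed
  have zbL: "\<epsilon> *\<^sub>R zb0 \<in> Lambda" using Lambda_scale[OF zb0L] ep by simp
  have zb0: "\<epsilon> *\<^sub>R zb0 \<noteq> 0" using ep unfolding zb0_def by (simp add: zero_prod_def)
  have p1: "(\<rho>, v, m, \<sigma>, p) + \<epsilon> *\<^sub>R zb0 \<in> Sset e" using mem[of \<epsilon>] ep by simp
  have m1: "(\<rho>, v, m, \<sigma>, p) - \<epsilon> *\<^sub>R zb0 \<in> Sset e" using mem[of "-\<epsilon>"] ep by simp
  show ?thesis using zbL zb0 p1 m1 by blast
qed

lemma S_flip: "((\<rho>, v, m, \<sigma>, p) \<in> Sset e) \<longleftrightarrow> ((-\<rho>, -v, m, \<sigma>, p) \<in> Sset (\<lambda>r. e (-r)))"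
  for \<sigma> :: "real^'n::finite^'n"
  unfolding Sset_iff by (auto simp: add.commute)

lemma Pmat_flip: "Pmat (\<lambda>r. e (-r)) (-\<rho>, -v, m, \<sigma>, p) = Pmat e (\<rho>, v, m, \<sigma>, p)"
  unfolding Pmat_def by (simp add: diff_diff_eq add.commute)

lemma Lambda_flip: assumes "(\<rho>, v, m, \<sigma>, p) \<in> Lambda" shows "(-\<rho>, -v, m, \<sigma>, p) \<in> Lambda"
proof -
  have L: "transpose \<sigma> = \<sigma> \<and> trace \<sigma> = 0 \<and>
   (\<exists>x t. (x, t) \<noteq> (0, 0) \<and> (\<sigma> + p *\<^sub>R mat 1) *v x + t *\<^sub>R v = 0 \<and> v \<bullet> x = 0 \<and> m \<bullet> x + \<rho> * t = 0)
   \<and> (\<rho>, v) \<noteq> (0, 0)" using assms unfolding Lambda_mem .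
  then obtain x t where H: "(x, t) \<noteq> (0, 0)" "(\<sigma> + p *\<^sub>R mat 1) *v x + t *\<^sub>R v = 0" "v \<bullet> x = 0" "m \<bullet> x + \<rho> * t = 0"
    by blast
  have H': "(x, -t) \<noteq> (0, 0)" "(\<sigma> + p *\<^sub>R mat 1) *v x + (-t) *\<^sub>R (-v) = 0" "(-v) \<bullet> x = 0" "m \<bullet> x + (-\<rho>) * (-t) = 0"
    using H by auto
  have "(-\<rho>, -v) \<noteq> (0, 0)" using L by auto
  thus ?thesis unfolding Lambda_mem using L H' by blast
qed

lemma D2:
  fixes e :: "real \<Rightarrow> real" and \<sigma> :: "real^'n::finite^'n"
  assumes n2: "CARD('n) \<ge> 2"
    and zS: "(\<rho>, v, m, \<sigma>, p) \<in> (Sset e :: 'n state set)" and r: "1 - \<rho> > 0"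
    and C2s: "norm (m - v) < sqrt (real CARD('n) * e (-1)) * (1 - \<rho>)"
    and nz: "Pmat e (\<rho>, v, m, \<sigma>, p) \<noteq> 0"
  shows "\<exists>zb \<in> Lambda - {0}. (\<rho>, v, m, \<sigma>, p) + zb \<in> Sset e \<and> (\<rho>, v, m, \<sigma>, p) - zb \<in> Sset e"
proof -
  let ?e = "\<lambda>r. e (-r)"
  have zS': "(-\<rho>, -v, m, \<sigma>, p) \<in> (Sset ?e :: 'n state set)" using zS S_flip by blast
  have r': "1 + -\<rho> > 0" using r by simp
  have C': "norm (m + -v) < sqrt (real CARD('n) * ?e 1) * (1 + -\<rho>)" using C2s by simp
  have nz': "Pmat ?e (-\<rho>, -v, m, \<sigma>, p) \<noteq> 0" using nz Pmat_flip by metis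
  obtain zb' where zb': "zb' \<in> Lambda - {0}" "(-\<rho>, -v, m, \<sigma>, p) + zb' \<in> Sset ?e" "(-\<rho>, -v, m, \<sigma>, p) - zb' \<in> Sset ?e"
    using D1[OF n2 zS' r' C' nz'] by blast
  obtain \<rho>1 v1 m1 \<sigma>1 p1 where z1: "zb' = (\<rho>1, v1, m1, \<sigma>1, p1)" by (cases zb') auto
  define zb where "zb = (-\<rho>1, -v1, m1, \<sigma>1, p1)"
  have "zb \<in> Lambda" unfolding zb_def using Lambda_flip zb'(1) z1 by blast
  moreover have "zb \<noteq> 0" using zb'(1) z1 unfolding zb_def by (auto simp: zero_prod_def)
  moreover have "(\<rho>, v, m, \<sigma>, p) + zb \<in> Sset e"
  proof -
    have "(-(\<rho> - \<rho>1), -(v - v1), m + m1, \<sigma> + \<sigma>1, p + p1) \<in> Sset ?e" using zb'(2) unfolding z1 by simp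
    hence "(\<rho> - \<rho>1, v - v1, m + m1, \<sigma> + \<sigma>1, p + p1) \<in> Sset e" using S_flip by blast
    thus ?thesis unfolding zb_def by simp
  qed
  moreover have "(\<rho>, v, m, \<sigma>, p) - zb \<in> Sset e"
  proof -
    have "(-(\<rho> + \<rho>1), -(v + v1), m - m1, \<sigma> - \<sigma>1, p - p1) \<in> Sset ?e" using zb'(3) unfolding z1 by simp
    hence "(\<rho> + \<rho>1, v + v1, m - m1, \<sigma> - \<sigma>1, p - p1) \<in> Sset e" using S_flip by blast
    thus ?thesis unfolding zb_def by simp
  qed
  ultimately show ?thesis by blast
qed

lemma sqrt_strict:
  fixes x s K :: real assumes "s > 0" "x \<ge> 0" "K > 0" "x^2 / (2 * s) < K * s / 2"
  shows "x < sqrt K * s"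
proof -
  have "x^2 < K * s^2" using assms by (simp add: divide_less_eq power2_eq_square algebra_simps)
  hence "sqrt (x^2) < sqrt (K * s^2)" by (rule real_sqrt_less_mono)
  thus ?thesis using assms by (simp add: real_sqrt_mult)
qed

lemma outer_double: "outer (v + v) (v + v) = 4 *\<^sub>R outer v v"
  by (simp add: vec_eq_iff outer_def algebra_simps)

lemma outer_mdouble: "outer (- v - v) (- v - v) = 4 *\<^sub>R outer v v"
  by (simp add: vec_eq_iff outer_def algebra_simps)

lemma part2:
  fixes e :: "real \<Rightarrow> real"
  assumes n2: "CARD('n::finite) \<ge> 2" and aff: "\<exists>A B. \<forall>r. e r = A * r + B" and pos1: "e 1 > 0" and posm1: "e (-1) > 0"
    and zS: "z \<in> (Sset e :: 'n state set)" and zK: "z \<notin> Kset e"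
  shows "\<exists>zb \<in> Lambda - {0}. z + zb \<in> Sset e \<and> z - zb \<in> Sset e"
proof -
  obtain \<rho> v m \<sigma> p where z: "z = (\<rho>, v, m, \<sigma>, p)" by (cases z) auto
  have zS': "(\<rho>, v, m, \<sigma>, p) \<in> Sset e" using zS z by simp
  note Z = zS'[unfolded Sset_iff]
  have sym: "transpose \<sigma> = \<sigma>" and tr: "trace \<sigma> = 0" using Z by auto
  show ?thesis
  proof (cases "Pmat e (\<rho>, v, m, \<sigma>, p) = 0")
    case P0: True
    have "\<rho> \<noteq> 1"
    proof
      assume r1: "\<rho> = 1"
      have "norm (m - v) \<le> 0" using Z r1 by simp
      hence mv: "m = v" by simp
      have "e 1 *\<^sub>R mat 1 + \<sigma> - (1 / 4) *\<^sub>R outer (v + v) (v + v) = 0"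
        using P0 unfolding Pmat_def r1 mv by simp
      hence "e 1 *\<^sub>R mat 1 + \<sigma> - outer v v = 0" unfolding outer_double by simp
      hence "outer v v - \<sigma> = e 1 *\<^sub>R mat 1" by (metis add_diff_cancel_left' diff_add_cancel diff_diff_eq2 eq_iff_diff_eq_0)
      hence "z \<in> Kset e" unfolding z Kset_def Zset_def using sym tr r1 mv by simp
      thus False using zK by simp
    qed
    moreover have "\<rho> \<noteq> -1"
    proof
      assume r1: "\<rho> = -1"
      have "norm (m + v) \<le> 0" using Z r1 by simp
      hence mv: "m = -v" by (simp add: eq_neg_iff_add_eq_0)
      have "e (-1) *\<^sub>R mat 1 + \<sigma> - (1 / 4) *\<^sub>R outer (- v - v) (- v - v) = 0"
        using P0 unfolding Pmat_def r1 mv by simp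
      hence "e (-1) *\<^sub>R mat 1 + \<sigma> - outer v v = 0" unfolding outer_mdouble by simp
      hence "outer v v - \<sigma> = e (-1) *\<^sub>R mat 1" by (metis add_diff_cancel_left' diff_add_cancel diff_diff_eq2 eq_iff_diff_eq_0)
      hence "z \<in> Kset e" unfolding z Kset_def Zset_def using sym tr r1 mv by simp
      thus False using zK by simp
    qed
    ultimately have "-1 < \<rho>" "\<rho> < 1" using Z by auto
    thus ?thesis unfolding z using caseA[OF n2 aff pos1 posm1 zS'] P0 by blast
  next
    case nz: False
    have symP: "transpose (Pmat e (\<rho>, v, m, \<sigma>, p)) = Pmat e (\<rho>, v, m, \<sigma>, p)" by (rule sym_P[OF sym])
    have trP: "trace (Pmat e (\<rho>, v, m, \<sigma>, p)) > 0"
      by (rule psd_trace_pos[OF symP psd_P[OF zS'] nz])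
    define N where "N = real CARD('n)"
    have Np: "N > 0" unfolding N_def by simp
    have "N * e \<rho> - hq (1 + \<rho>) (norm (m + v)) - hq (1 - \<rho>) (norm (m - v)) > 0"
      using trP unfolding trace_P[OF tr] N_def .
    moreover have "e \<rho> = e 1 * (1 + \<rho>) / 2 + e (-1) * (1 - \<rho>) / 2" by (rule e_affine_conv(1)[OF aff])
    ultimately have "(N * e 1 * (1 + \<rho>) / 2 - hq (1 + \<rho>) (norm (m + v))) + (N * e (-1) * (1 - \<rho>) / 2 - hq (1 - \<rho>) (norm (m - v))) > 0"
      by (simp add: algebra_simps)
    hence "N * e 1 * (1 + \<rho>) / 2 - hq (1 + \<rho>) (norm (m + v)) > 0 \<or> N * e (-1) * (1 - \<rho>) / 2 - hq (1 - \<rho>) (norm (m - v)) > 0"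
      by linarith
    thus ?thesis
    proof
      assume H: "N * e 1 * (1 + \<rho>) / 2 - hq (1 + \<rho>) (norm (m + v)) > 0"
      have s: "1 + \<rho> > 0"
      proof (rule ccontr)
        assume "\<not> 1 + \<rho> > 0"
        hence "1 + \<rho> = 0" using Z by simp
        thus False using H by (simp add: hq_def)
      qed
      have "norm (m + v) < sqrt (N * e 1) * (1 + \<rho>)"
        by (rule sqrt_strict) (use s H Np pos1 in \<open>auto simp: hq_def\<close>)
      thus ?thesis unfolding z using D1[OF n2 zS' s _ nz] unfolding N_def by blast
    next
      assume H: "N * e (-1) * (1 - \<rho>) / 2 - hq (1 - \<rho>) (norm (m - v)) > 0"
      have r: "1 - \<rho> > 0"
      proof (rule ccontr)
        assume "\<not> 1 - \<rho> > 0"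
        hence "1 - \<rho> = 0" using Z by simp
        thus False using H by (simp add: hq_def)
      qed
      have "norm (m - v) < sqrt (N * e (-1)) * (1 - \<rho>)"
        by (rule sqrt_strict) (use r H Np posm1 in \<open>auto simp: hq_def\<close>)
      thus ?thesis unfolding z using D2[OF n2 zS' r _ nz] unfolding N_def by blast
    qed
  qed
qed

theorem lemma3p11:
  fixes e :: "real \<Rightarrow> real"
  assumes n2: "CARD('n::finite) \<ge> 2"
    and affine: "\<exists>a b. \<forall>r. e r = a * r + b"
    and pos1: "e 1 > 0" and posm1: "e (-1) > 0"
  shows "bounded (proj ` (Uset e :: 'n state set))
    \<and> (\<forall>z \<in> closure (Uset e :: 'n state set) - Kset e.
          \<exists>zb \<in> Lambda - {0}. z + zb \<in> closure (Uset e) \<and> z - zb \<in> closure (Uset e))"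
proof
  have cl: "closure (Uset e :: 'n state set) = Sset e" by (rule clU_eq[OF affine pos1 posm1])
  show "bounded (proj ` (Uset e :: 'n state set))"
    by (rule bounded_subset[OF bounded_projS[OF affine pos1 posm1]]) (use U_sub_S[OF affine pos1 posm1] in blast)
  show "\<forall>z \<in> closure (Uset e :: 'n state set) - Kset e.
          \<exists>zb \<in> Lambda - {0}. z + zb \<in> closure (Uset e) \<and> z - zb \<in> closure (Uset e)"
    unfolding cl using part2[OF n2 affine pos1 posm1] by blast
qed

end
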